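(* Let $A\in\mathbb{C}^{2^n\times 2^n}$, $L=(A+A^\dagger)/2$, $H=(A-A^\dagger)/(2i)$, and let $k_1,\dots,k_M\in\mathbb{R}$ with $k_{\max}=\max_j|k_j|$. Assume access to $U_A$, an $(\alpha_A,m_A,\epsilon_A)$-block encoding of $A$, and to $\epsilon_R$-accurate multi-controlled $R_Z(\phi)$ gates. Then there exists a $(\sqrt{1+k_{\max}^2}\,\alpha_A,\ m_A+2,\ \epsilon)$-block encoding of $$\mathcal{S}=\sum_{j=1}^M|j\rangle\langle j|\otimes(k_jL+H),$$ as long as $\epsilon_A\sqrt{1+k_{\max}^2}+2M\sqrt{1+k_{\max}^2}\,\epsilon_R\,\alpha_A\le\epsilon$. The construction uses one call to $U_A$, one call to $U_A^\dagger$, and $2M$ multi-controlled $R_Z(\phi)$ gates.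
   Context: A unitary $U$ acting on $m$ ancilla qubits plus the system is an $(\alpha,m,\epsilon)$-block encoding of an operator $B$ if $\|\alpha(\langle0|^{\otimes m}\otimes I)U(|0\rangle^{\otimes m}\otimes I)-B\|\le\epsilon$, where $\|\cdot\|$ is the spectral norm. The states $|j\rangle$, $j=1,\dots,M$, form an orthonormal basis of the index register (so $\sum_j|j\rangle\langle j|=I$). An $\epsilon_R$-accurate gate is an implementation within operator-norm distance $\epsilon_R$ of the ideal gate; $R_Z(\phi)=e^{-i\phi Z/2}$. *)

theory Defs
  imports Complex_Main "Jordan_Normal_Form.Matrix"
begin

definition dag :: "complex mat \<Rightarrow> complex mat" where
  "dag A = mat (dim_col A) (dim_row A) (\<lambda>(i, j). cnj (A $$ (j, i)))"

definition is_unitary :: "complex mat \<Rightarrow> bool" where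
  "is_unitary U \<longleftrightarrow> U \<in> carrier_mat (dim_row U) (dim_row U) \<and> dag U * U = 1\<^sub>m (dim_row U)"

definition vnorm :: "complex vec \<Rightarrow> real" where
  "vnorm v = sqrt (\<Sum>i<dim_vec v. (cmod (v $ i))\<^sup>2)"

definition opnorm :: "complex mat \<Rightarrow> real" where
  "opnorm B = Sup {vnorm (B *\<^sub>v v) | v. v \<in> carrier_vec (dim_col B) \<and> vnorm v \<le> 1}"

text \<open>Upper-left d x d block, i.e. (<0|^{m} (x) I) U (|0>^{m} (x) I) when the
  ancilla register is the most significant tensor factor.\<close>
definition top_block :: "nat \<Rightarrow> complex mat \<Rightarrow> complex mat" where
  "top_block d U = mat d d (\<lambda>(i, j). U $$ (i, j))"

text \<open>U (on m ancilla qubits plus a d-dimensional system, ancillas first) is an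
  (alpha, m, eps)-block encoding of the d x d matrix B.\<close>
definition block_encoding ::
  "real \<Rightarrow> nat \<Rightarrow> real \<Rightarrow> complex mat \<Rightarrow> complex mat \<Rightarrow> bool" where
  "block_encoding \<alpha> m \<epsilon> U B \<longleftrightarrow>
     (let d = dim_row B in
       B \<in> carrier_mat d d \<and> U \<in> carrier_mat (2^m * d) (2^m * d) \<and> is_unitary U \<and>
       opnorm (complex_of_real \<alpha> \<cdot>\<^sub>m top_block d U - B) \<le> \<epsilon>)"

definition herm_part :: "complex mat \<Rightarrow> complex mat" where
  "herm_part A = (1/2 :: complex) \<cdot>\<^sub>m (A + dag A)"

definition antiherm_part :: "complex mat \<Rightarrow> complex mat" where
  "antiherm_part A = (1/(2*\<i>)) \<cdot>\<^sub>m (A - dag A)"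

text \<open>S = sum_j |j><j| (x) (k_j L + H); index register (dimension M, basis
  states j = 0..M-1 standing for the paper's 1..M) is the more significant factor.\<close>
definition S_op :: "nat \<Rightarrow> nat \<Rightarrow> (nat \<Rightarrow> real) \<Rightarrow> complex mat \<Rightarrow> complex mat" where
  "S_op n M k A = mat (M * 2^n) (M * 2^n) (\<lambda>(r, c).
      if r div 2^n = c div 2^n then
        (complex_of_real (k (r div 2^n)) \<cdot>\<^sub>m herm_part A + antiherm_part A) $$ (r mod 2^n, c mod 2^n)
      else 0)"

text \<open>Full register, most significant first: two new ancilla qubits (value a < 4,
  qubit t of it is bit t of a), the m_A ancilla qubits of U_A (value b), the
  index register (value j < M), the system (value s < 2^n).
  Basis index r = ((a * 2^mA + b) * M + j) * 2^n + s.\<close>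

definition full_dim :: "nat \<Rightarrow> nat \<Rightarrow> nat \<Rightarrow> nat" where
  "full_dim n M mA = 4 * 2^mA * M * 2^n"

definition idx_s :: "nat \<Rightarrow> nat \<Rightarrow> nat \<Rightarrow> nat \<Rightarrow> nat" where
  "idx_s n M mA r = r mod 2^n"
definition idx_j :: "nat \<Rightarrow> nat \<Rightarrow> nat \<Rightarrow> nat \<Rightarrow> nat" where
  "idx_j n M mA r = (r div 2^n) mod M"
definition idx_b :: "nat \<Rightarrow> nat \<Rightarrow> nat \<Rightarrow> nat \<Rightarrow> nat" where
  "idx_b n M mA r = (r div (2^n * M)) mod 2^mA"
definition idx_a :: "nat \<Rightarrow> nat \<Rightarrow> nat \<Rightarrow> nat \<Rightarrow> nat" where
  "idx_a n M mA r = r div (2^n * M * 2^mA)"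

definition abit :: "nat \<Rightarrow> nat \<Rightarrow> bool" where
  "abit t a = odd (a div 2^t)"

text \<open>Control specification: optional required values of new ancilla qubit 0,
  new ancilla qubit 1, and of the index register.\<close>
datatype ctrl = Ctrl "bool option" "bool option" "nat option"

fun ctrl_sat :: "ctrl \<Rightarrow> nat \<Rightarrow> nat \<Rightarrow> bool" where
  "ctrl_sat (Ctrl c0 c1 cj) a j \<longleftrightarrow>
     (\<forall>x. c0 = Some x \<longrightarrow> abit 0 a = x) \<and> (\<forall>x. c1 = Some x \<longrightarrow> abit 1 a = x) \<and>
     (\<forall>x. cj = Some x \<longrightarrow> j = x)"

datatype gate =
    G_Had nat          \<comment> \<open>exact Hadamard on new ancilla qubit t\<close>
  | G_X nat
  | G_UA ctrl          \<comment> \<open>(controlled) call to U_A on (U_A ancillas, system)\<close>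
  | G_UAdag ctrl
  | G_RZ ctrl nat real \<comment> \<open>implemented multi-controlled R_Z(phi) on new ancilla qubit t\<close>

text \<open>Single-qubit gate W (2x2) on new ancilla qubit t, identity elsewhere.\<close>
definition on_anc :: "nat \<Rightarrow> nat \<Rightarrow> nat \<Rightarrow> nat \<Rightarrow> complex mat \<Rightarrow> complex mat" where
  "on_anc n M mA t W = mat (full_dim n M mA) (full_dim n M mA) (\<lambda>(r, c).
     let ar = idx_a n M mA r; ac = idx_a n M mA c in
     if r mod (2^n * M * 2^mA) = c mod (2^n * M * 2^mA) \<and>
        (\<forall>t'<2. t' \<noteq> t \<longrightarrow> abit t' ar = abit t' ac)
     then W $$ (if abit t ar then 1 else 0, if abit t ac then 1 else 0) else 0)"

definition hadamard :: "complex mat" where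
  "hadamard = mat 2 2 (\<lambda>(i, j). if i = 1 \<and> j = 1 then - 1 / sqrt 2 else 1 / sqrt 2)"

definition pauliX :: "complex mat" where
  "pauliX = mat 2 2 (\<lambda>(i, j). if i \<noteq> j then 1 else 0)"

definition rz :: "real \<Rightarrow> complex mat" where
  "rz \<phi> = mat 2 2 (\<lambda>(i, j). if i = j then (if i = 0 then cis (- \<phi> / 2) else cis (\<phi> / 2)) else 0)"

definition rz_ideal :: "nat \<Rightarrow> nat \<Rightarrow> nat \<Rightarrow> ctrl \<Rightarrow> nat \<Rightarrow> real \<Rightarrow> complex mat" where
  "rz_ideal n M mA c t \<phi> = mat (full_dim n M mA) (full_dim n M mA) (\<lambda>(r, s).
     if ctrl_sat c (idx_a n M mA r) (idx_j n M mA r) then on_anc n M mA t (rz \<phi>) $$ (r, s)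
     else if r = s then 1 else 0)"

text \<open>(Controlled) application of V (on U_A ancillas (x) system, dimension
  2^mA * 2^n, index b * 2^n + s) to the full register.\<close>
definition ctrl_call :: "nat \<Rightarrow> nat \<Rightarrow> nat \<Rightarrow> ctrl \<Rightarrow> complex mat \<Rightarrow> complex mat" where
  "ctrl_call n M mA c V = mat (full_dim n M mA) (full_dim n M mA) (\<lambda>(r, s).
     if idx_a n M mA r = idx_a n M mA s \<and> idx_j n M mA r = idx_j n M mA s then
       (if ctrl_sat c (idx_a n M mA r) (idx_j n M mA r)
        then V $$ (idx_b n M mA r * 2^n + idx_s n M mA r, idx_b n M mA s * 2^n + idx_s n M mA s)
        else if r = s then 1 else 0)
     else 0)"

fun gate_mat :: "nat \<Rightarrow> nat \<Rightarrow> nat \<Rightarrow> complex mat \<Rightarrow>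
    (ctrl \<Rightarrow> nat \<Rightarrow> real \<Rightarrow> complex mat) \<Rightarrow> gate \<Rightarrow> complex mat" where
  "gate_mat n M mA UA R (G_Had t) = on_anc n M mA t hadamard"
| "gate_mat n M mA UA R (G_X t) = on_anc n M mA t pauliX"
| "gate_mat n M mA UA R (G_UA c) = ctrl_call n M mA c UA"
| "gate_mat n M mA UA R (G_UAdag c) = ctrl_call n M mA c (dag UA)"
| "gate_mat n M mA UA R (G_RZ c t \<phi>) = R c t \<phi>"

text \<open>Circuit: gates applied left to right (first list element acts first).\<close>
definition circuit_mat :: "nat \<Rightarrow> nat \<Rightarrow> nat \<Rightarrow> complex mat \<Rightarrow>
    (ctrl \<Rightarrow> nat \<Rightarrow> real \<Rightarrow> complex mat) \<Rightarrow> gate list \<Rightarrow> complex mat" where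
  "circuit_mat n M mA UA R gs =
     foldl (\<lambda>acc g. gate_mat n M mA UA R g * acc) (1\<^sub>m (full_dim n M mA)) gs"

fun valid_gate :: "gate \<Rightarrow> bool" where
  "valid_gate (G_Had t) \<longleftrightarrow> t < 2"
| "valid_gate (G_X t) \<longleftrightarrow> t < 2"
| "valid_gate (G_RZ c t \<phi>) \<longleftrightarrow> t < 2"
| "valid_gate _ \<longleftrightarrow> True"

fun is_UA_call :: "gate \<Rightarrow> bool" where
  "is_UA_call (G_UA _) = True" | "is_UA_call _ = False"
fun is_UAdag_call :: "gate \<Rightarrow> bool" where
  "is_UAdag_call (G_UAdag _) = True" | "is_UAdag_call _ = False"
fun is_RZ :: "gate \<Rightarrow> bool" where
  "is_RZ (G_RZ _ _ _) = True" | "is_RZ _ = False"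

end

theory Submission
  imports Defs "HOL-Analysis.L2_Norm" "Jordan_Normal_Form.Determinant"
begin

lemma vnorm_L2: "vnorm v = L2_set (\<lambda>i. cmod (v $ i)) {..<dim_vec v}"
  by (simp add: vnorm_def L2_set_def)

lemma vnorm_nonneg[simp]: "0 \<le> vnorm v" by (simp add: vnorm_def sum_nonneg)

lemma vnorm_add: assumes "dim_vec u = dim_vec w" shows "vnorm (u + w) \<le> vnorm u + vnorm w"
proof -
  have "vnorm (u+w) = L2_set (\<lambda>i. cmod ((u+w) $ i)) {..<dim_vec w}" by (simp add: vnorm_L2)
  also have "\<dots> \<le> L2_set (\<lambda>i. cmod (u $ i) + cmod (w $ i)) {..<dim_vec w}"
    by (rule L2_set_mono) (auto simp: norm_triangle_ineq)
  also have "\<dots> \<le> L2_set (\<lambda>i. cmod (u $ i)) {..<dim_vec w} + L2_set (\<lambda>i. cmod (w $ i)) {..<dim_vec w}"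
    by (rule L2_set_triangle_ineq)
  finally show ?thesis using assms by (simp add: vnorm_L2)
qed

lemma vnorm_smult: "vnorm (a \<cdot>\<^sub>v v) = cmod a * vnorm v"
proof -
  have "(\<Sum>i<dim_vec v. (cmod (a * v $ i))\<^sup>2) = (cmod a)\<^sup>2 * (\<Sum>i<dim_vec v. (cmod (v $ i))\<^sup>2)"
    by (simp add: norm_mult power_mult_distrib sum_distrib_left)
  then show ?thesis by (simp add: vnorm_def real_sqrt_mult)
qed

lemma vnorm_zero: "vnorm v = 0 \<Longrightarrow> i < dim_vec v \<Longrightarrow> v $ i = 0"
  unfolding vnorm_L2 by (subst (asm) L2_set_eq_0_iff) auto

lemma entry_le_vnorm: "i < dim_vec v \<Longrightarrow> cmod (v $ i) \<le> vnorm v"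
  unfolding vnorm_L2 by (rule member_le_L2_set) auto

lemma mv_index: "i < dim_row B \<Longrightarrow> dim_vec v = dim_col B \<Longrightarrow>
   (B *\<^sub>v v) $ i = (\<Sum>j<dim_vec v. B $$ (i,j) * v $ j)"
  by (simp add: scalar_prod_def atLeast0LessThan row_def)

lemma opnorm_set_bdd: "bdd_above {vnorm (B *\<^sub>v v) | v. v \<in> carrier_vec (dim_col B) \<and> vnorm v \<le> 1}"
proof (rule bdd_aboveI[where M = "\<Sum>i<dim_row B. \<Sum>j<dim_col B. cmod (B $$ (i,j))"])
  fix x assume "x \<in> {vnorm (B *\<^sub>v v) | v. v \<in> carrier_vec (dim_col B) \<and> vnorm v \<le> 1}"
  then obtain v where v: "v \<in> carrier_vec (dim_col B)" "vnorm v \<le> 1" and x: "x = vnorm (B *\<^sub>v v)" by auto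
  have "x = L2_set (\<lambda>i. cmod ((B *\<^sub>v v) $ i)) {..<dim_row B}" using x by (simp add: vnorm_L2)
  also have "\<dots> \<le> (\<Sum>i<dim_row B. cmod ((B *\<^sub>v v) $ i))" by (rule L2_set_le_sum) auto
  also have "\<dots> \<le> (\<Sum>i<dim_row B. \<Sum>j<dim_col B. cmod (B $$ (i,j)))"
  proof (rule sum_mono)
    fix i assume i: "i \<in> {..<dim_row B}"
    have "cmod ((B *\<^sub>v v) $ i) = cmod (\<Sum>j<dim_col B. B $$ (i,j) * v $ j)"
      using i v by (subst mv_index) auto
    also have "\<dots> \<le> (\<Sum>j<dim_col B. cmod (B $$ (i,j) * v $ j))" by (rule norm_sum)
    also have "\<dots> \<le> (\<Sum>j<dim_col B. cmod (B $$ (i,j)))"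
    proof (rule sum_mono)
      fix j assume j: "j \<in> {..<dim_col B}"
      have "cmod (v $ j) \<le> 1" using entry_le_vnorm[of j v] v j by auto
      then show "cmod (B $$ (i,j) * v $ j) \<le> cmod (B $$ (i,j))"
        by (simp add: norm_mult mult_left_le)
    qed
    finally show "cmod ((B *\<^sub>v v) $ i) \<le> (\<Sum>j<dim_col B. cmod (B $$ (i,j)))" .
  qed
  finally show "x \<le> (\<Sum>i<dim_row B. \<Sum>j<dim_col B. cmod (B $$ (i,j)))" .
qed

lemma opnorm_upper: "v \<in> carrier_vec (dim_col B) \<Longrightarrow> vnorm v \<le> 1 \<Longrightarrow> vnorm (B *\<^sub>v v) \<le> opnorm B"
  unfolding opnorm_def by (rule cSup_upper[OF _ opnorm_set_bdd]) auto

lemma opnorm_nonneg: "0 \<le> opnorm B"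
proof -
  have "vnorm (B *\<^sub>v 0\<^sub>v (dim_col B)) = 0"
    by (simp add: vnorm_def)
  moreover have "vnorm (0\<^sub>v (dim_col B)) \<le> 1" by (simp add: vnorm_def)
  ultimately show ?thesis using opnorm_upper[of "0\<^sub>v (dim_col B)" B] by auto
qed

lemma opnorm_bound: assumes v: "v \<in> carrier_vec (dim_col B)"
  shows "vnorm (B *\<^sub>v v) \<le> opnorm B * vnorm v"
proof (cases "vnorm v = 0")
  case True
  then have "\<And>j. j < dim_vec v \<Longrightarrow> v $ j = 0" by (rule vnorm_zero)
  then have "vnorm (B *\<^sub>v v) = 0" using v by (simp add: vnorm_def scalar_prod_def)
  then show ?thesis using True by simp
next
  case False
  then have pos: "vnorm v > 0" using vnorm_nonneg[of v] by linarith
  define w where "w = complex_of_real (1 / vnorm v) \<cdot>\<^sub>v v"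
  have w: "w \<in> carrier_vec (dim_col B)" "vnorm w \<le> 1" using v pos by (auto simp: w_def vnorm_smult norm_divide)
  have "B *\<^sub>v w = complex_of_real (1 / vnorm v) \<cdot>\<^sub>v (B *\<^sub>v v)"
    unfolding w_def using v by (intro mult_mat_vec[of _ "dim_row B" "dim_col B"]) auto
  then have "vnorm (B *\<^sub>v w) = vnorm (B *\<^sub>v v) / vnorm v" using pos by (simp add: vnorm_smult norm_divide)
  then have "vnorm (B *\<^sub>v v) / vnorm v \<le> opnorm B" using opnorm_upper[OF w] by simp
  then show ?thesis using pos by (simp add: divide_le_eq mult.commute)
qed

lemma opnorm_le: assumes c: "0 \<le> c" and h: "\<And>v. v \<in> carrier_vec (dim_col B) \<Longrightarrow> vnorm (B *\<^sub>v v) \<le> c * vnorm v"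
  shows "opnorm B \<le> c"
  unfolding opnorm_def
proof (rule cSup_least)
  show "{vnorm (B *\<^sub>v v) |v. v \<in> carrier_vec (dim_col B) \<and> vnorm v \<le> 1} \<noteq> {}"
  proof -
    have "vnorm (B *\<^sub>v 0\<^sub>v (dim_col B)) \<in> {vnorm (B *\<^sub>v v) |v. v \<in> carrier_vec (dim_col B) \<and> vnorm v \<le> 1}"
      by (auto intro!: exI[of _ "0\<^sub>v (dim_col B)"] simp: vnorm_def)
    then show ?thesis by blast
  qed
  fix x assume "x \<in> {vnorm (B *\<^sub>v v) |v. v \<in> carrier_vec (dim_col B) \<and> vnorm v \<le> 1}"
  then obtain v where v: "v \<in> carrier_vec (dim_col B)" "vnorm v \<le> 1" and x: "x = vnorm (B *\<^sub>v v)" by auto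
  have "x \<le> c * vnorm v" using h[OF v(1)] x by simp
  also have "\<dots> \<le> c" using v(2) c by (simp add: mult_left_le)
  finally show "x \<le> c" .
qed

lemma opnorm_add: fixes B C :: "complex mat" assumes "B \<in> carrier_mat nr nc" "C \<in> carrier_mat nr nc"
  shows "opnorm (B + C) \<le> opnorm B + opnorm C"
proof (rule opnorm_le)
  show "0 \<le> opnorm B + opnorm C" by (simp add: opnorm_nonneg add_nonneg_nonneg)
  fix v :: "complex vec" assume v: "v \<in> carrier_vec (dim_col (B + C))"
  then have v': "v \<in> carrier_vec nc" using assms by simp
  have "(B + C) *\<^sub>v v = B *\<^sub>v v + C *\<^sub>v v" using assms v' by (simp add: add_mult_distrib_mat_vec)
  then have "vnorm ((B + C) *\<^sub>v v) \<le> vnorm (B *\<^sub>v v) + vnorm (C *\<^sub>v v)"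
    using assms by (simp add: vnorm_add)
  also have "\<dots> \<le> opnorm B * vnorm v + opnorm C * vnorm v"
    using opnorm_bound[of v B] opnorm_bound[of v C] assms v' by (intro add_mono) auto
  finally show "vnorm ((B + C) *\<^sub>v v) \<le> (opnorm B + opnorm C) * vnorm v" by (simp add: algebra_simps)
qed

lemma opnorm_diff: fixes B C :: "complex mat" assumes "B \<in> carrier_mat nr nc" "C \<in> carrier_mat nr nc"
  shows "opnorm (B - C) \<le> opnorm B + opnorm C"
proof (rule opnorm_le)
  show "0 \<le> opnorm B + opnorm C" by (simp add: opnorm_nonneg add_nonneg_nonneg)
  fix v :: "complex vec" assume v: "v \<in> carrier_vec (dim_col (B - C))"
  then have v': "v \<in> carrier_vec nc" using assms by simp
  have "(B - C) *\<^sub>v v = B *\<^sub>v v + (-1) \<cdot>\<^sub>v (C *\<^sub>v v)" using assms v'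
    by (intro eq_vecI) (auto simp: minus_mult_distrib_mat_vec)
  then have "vnorm ((B - C) *\<^sub>v v) \<le> vnorm (B *\<^sub>v v) + vnorm (C *\<^sub>v v)"
    using assms vnorm_add[of "B *\<^sub>v v" "(-1) \<cdot>\<^sub>v (C *\<^sub>v v)"] by (simp add: vnorm_smult)
  also have "\<dots> \<le> opnorm B * vnorm v + opnorm C * vnorm v"
    using opnorm_bound[of v B] opnorm_bound[of v C] assms v' by (intro add_mono) auto
  finally show "vnorm ((B - C) *\<^sub>v v) \<le> (opnorm B + opnorm C) * vnorm v" by (simp add: algebra_simps)
qed

lemma opnorm_mult: fixes B C :: "complex mat" assumes "B \<in> carrier_mat nr m" "C \<in> carrier_mat m nc"
  shows "opnorm (B * C) \<le> opnorm B * opnorm C"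
proof (rule opnorm_le)
  show "0 \<le> opnorm B * opnorm C" by (simp add: opnorm_nonneg)
  fix v :: "complex vec" assume v: "v \<in> carrier_vec (dim_col (B * C))"
  then have v': "v \<in> carrier_vec nc" using assms by simp
  have "vnorm ((B * C) *\<^sub>v v) = vnorm (B *\<^sub>v (C *\<^sub>v v))" using assms v' by simp
  also have "\<dots> \<le> opnorm B * vnorm (C *\<^sub>v v)" using assms v' by (intro opnorm_bound) auto
  also have "\<dots> \<le> opnorm B * (opnorm C * vnorm v)" using assms v' opnorm_nonneg[of B]
    by (intro mult_left_mono opnorm_bound) auto
  finally show "vnorm ((B * C) *\<^sub>v v) \<le> opnorm B * opnorm C * vnorm v" by (simp add: mult.assoc)
qed

lemma opnorm_smult: fixes B :: "complex mat" shows "opnorm (a \<cdot>\<^sub>m B) \<le> cmod a * opnorm B"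
proof (rule opnorm_le)
  show "0 \<le> cmod a * opnorm B" by (simp add: opnorm_nonneg)
  fix v :: "complex vec" assume v: "v \<in> carrier_vec (dim_col (a \<cdot>\<^sub>m B))"
  have "(a \<cdot>\<^sub>m B) *\<^sub>v v = a \<cdot>\<^sub>v (B *\<^sub>v v)" using v
    by (intro eq_vecI) (auto simp: scalar_prod_def row_def sum_distrib_left ac_simps)
  then have "vnorm ((a \<cdot>\<^sub>m B) *\<^sub>v v) = cmod a * vnorm (B *\<^sub>v v)" by (simp add: vnorm_smult)
  also have "\<dots> \<le> cmod a * (opnorm B * vnorm v)" using v by (intro mult_left_mono opnorm_bound) auto
  finally show "vnorm ((a \<cdot>\<^sub>m B) *\<^sub>v v) \<le> cmod a * opnorm B * vnorm v" by (simp add: mult.assoc)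
qed

lemma dag_carrier[simp]: "dag A \<in> carrier_mat (dim_col A) (dim_row A)"
  by (simp add: dag_def)
lemma dag_dims[simp]: "dim_row (dag A) = dim_col A" "dim_col (dag A) = dim_row A"
  by (simp_all add: dag_def)
lemma dag_index[simp]: "i < dim_col A \<Longrightarrow> j < dim_row A \<Longrightarrow> dag A $$ (i,j) = cnj (A $$ (j,i))"
  by (simp add: dag_def)
lemma dag_dag[simp]: "dag (dag A) = A"
  by (intro eq_matI) auto
lemma dag_mult: assumes "A \<in> carrier_mat nr m" "B \<in> carrier_mat m nc"
  shows "dag (A * B) = dag B * dag A"
proof (rule eq_matI)
  fix i j assume ij: "i < dim_row (dag B * dag A)" "j < dim_col (dag B * dag A)"
  then have i: "i < nc" and j: "j < nr" using assms by auto
  have "dag (A * B) $$ (i,j) = cnj (\<Sum>k<m. A $$ (j,k) * B $$ (k,i))"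
    using assms i j by (simp add: scalar_prod_def row_def col_def atLeast0LessThan)
  also have "\<dots> = (\<Sum>k<m. cnj (B $$ (k,i)) * cnj (A $$ (j,k)))"
    by (simp add: mult.commute)
  also have "\<dots> = (dag B * dag A) $$ (i,j)"
    using assms i j by (simp add: scalar_prod_def row_def col_def atLeast0LessThan)
  finally show "dag (A * B) $$ (i,j) = (dag B * dag A) $$ (i,j)" .
qed (use assms in auto)
lemma dag_one[simp]: "dag (1\<^sub>m n) = 1\<^sub>m n"
  by (intro eq_matI) auto

definition ip :: "complex vec \<Rightarrow> complex vec \<Rightarrow> complex" where
  "ip u w = (\<Sum>i<dim_vec w. cnj (u $ i) * w $ i)"

lemma ip_self: "ip v v = complex_of_real ((vnorm v)\<^sup>2)"
proof -
  have "ip v v = (\<Sum>i<dim_vec v. complex_of_real ((cmod (v $ i))\<^sup>2))"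
    unfolding ip_def by (intro sum.cong refl) (metis complex_norm_square mult.commute of_real_power)
  also have "\<dots> = complex_of_real ((vnorm v)\<^sup>2)" by (simp add: vnorm_def sum_nonneg)
  finally show ?thesis .
qed

lemma ip_adj: assumes A: "A \<in> carrier_mat nr nc" and v: "v \<in> carrier_vec nc" and w: "w \<in> carrier_vec nr"
  shows "ip (A *\<^sub>v v) w = ip v (dag A *\<^sub>v w)"
proof -
  have "ip (A *\<^sub>v v) w = (\<Sum>i<nr. cnj (\<Sum>k<nc. A $$ (i,k) * v $ k) * w $ i)"
    unfolding ip_def using A v w by (intro sum.cong refl) (auto simp: scalar_prod_def row_def atLeast0LessThan)
  also have "\<dots> = (\<Sum>i<nr. \<Sum>k<nc. cnj (v $ k) * (cnj (A $$ (i,k)) * w $ i))"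
    by (simp only: cnj_sum complex_cnj_mult sum_distrib_right sum_distrib_left) (simp add: ac_simps)
  also have "\<dots> = (\<Sum>k<nc. \<Sum>i<nr. cnj (v $ k) * (cnj (A $$ (i,k)) * w $ i))"
    by (rule sum.swap)
  also have "\<dots> = ip v (dag A *\<^sub>v w)"
    unfolding ip_def using A v w by (intro sum.cong refl) (auto simp: scalar_prod_def row_def atLeast0LessThan sum_distrib_left)
  finally show ?thesis .
qed

lemma ip_cs: assumes "dim_vec u = dim_vec w" shows "cmod (ip u w) \<le> vnorm u * vnorm w"
proof -
  have "cmod (ip u w) \<le> (\<Sum>i<dim_vec w. cmod (cnj (u $ i) * w $ i))"
    unfolding ip_def by (rule norm_sum)
  also have "\<dots> = (\<Sum>i<dim_vec w. \<bar>cmod (u $ i)\<bar> * \<bar>cmod (w $ i)\<bar>)" by (simp add: norm_mult)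
  also have "\<dots> \<le> L2_set (\<lambda>i. cmod (u $ i)) {..<dim_vec w} * L2_set (\<lambda>i. cmod (w $ i)) {..<dim_vec w}"
    by (rule L2_set_mult_ineq)
  finally show ?thesis using assms by (simp add: vnorm_L2)
qed

lemma vnorm_eq_from_ip: "ip u u = ip v v \<Longrightarrow> vnorm u = vnorm v"
proof -
  assume "ip u u = ip v v"
  then have "complex_of_real ((vnorm u)\<^sup>2) = complex_of_real ((vnorm v)\<^sup>2)" by (simp only: ip_self)
  then have "(vnorm u)\<^sup>2 = (vnorm v)\<^sup>2" by (simp only: of_real_eq_iff)
  then show ?thesis using vnorm_nonneg[of u] vnorm_nonneg[of v] by (simp add: power2_eq_iff_nonneg)
qed

lemma unitary_vnorm: assumes U: "is_unitary U" and v: "v \<in> carrier_vec (dim_row U)"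
  shows "vnorm (U *\<^sub>v v) = vnorm v"
proof -
  let ?n = "dim_row U"
  have Uc: "U \<in> carrier_mat ?n ?n" and UU: "dag U * U = 1\<^sub>m ?n" using U unfolding is_unitary_def by blast+
  have cU: "dim_col U = ?n" using Uc by (rule carrier_matD(2))
  have dU: "dag U \<in> carrier_mat ?n ?n" using dag_carrier[of U] unfolding cU .
  have Uv: "U *\<^sub>v v \<in> carrier_vec ?n" using Uc v by (rule mult_mat_vec_carrier)
  have "ip (U *\<^sub>v v) (U *\<^sub>v v) = ip v (dag U *\<^sub>v (U *\<^sub>v v))"
    by (rule ip_adj[OF Uc v Uv])
  also have "dag U *\<^sub>v (U *\<^sub>v v) = (dag U * U) *\<^sub>v v"
    by (rule assoc_mult_mat_vec[OF dU Uc v, symmetric])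
  also have "\<dots> = v" unfolding UU using v by (rule one_mult_mat_vec)
  finally show ?thesis by (rule vnorm_eq_from_ip)
qed

lemma unitary_opnorm: assumes "is_unitary U" shows "opnorm U \<le> 1"
proof (rule opnorm_le)
  fix v :: "complex vec" assume v: "v \<in> carrier_vec (dim_col U)"
  have "U \<in> carrier_mat (dim_row U) (dim_row U)" using assms unfolding is_unitary_def by blast
  then have "dim_col U = dim_row U" by (rule carrier_matD(2))
  then have "v \<in> carrier_vec (dim_row U)" using v by simp
  then show "vnorm (U *\<^sub>v v) \<le> 1 * vnorm v" using unitary_vnorm[OF assms] by simp
qed simp

lemma opnorm_dag: fixes E :: "complex mat" shows "opnorm (dag E) \<le> opnorm E"
proof (rule opnorm_le[OF opnorm_nonneg])
  fix v :: "complex vec" assume v0: "v \<in> carrier_vec (dim_col (dag E))"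
  then have v: "v \<in> carrier_vec (dim_row E)" by simp
  let ?w = "dag E *\<^sub>v v"
  have dE: "dag E \<in> carrier_mat (dim_col E) (dim_row E)" by (rule dag_carrier)
  have w: "?w \<in> carrier_vec (dim_col E)" using dE v by (rule mult_mat_vec_carrier)
  have "complex_of_real ((vnorm ?w)\<^sup>2) = ip ?w ?w" by (simp only: ip_self)
  also have "\<dots> = ip v (dag (dag E) *\<^sub>v ?w)" by (rule ip_adj[OF dE v w])
  finally have eq: "complex_of_real ((vnorm ?w)\<^sup>2) = ip v (E *\<^sub>v ?w)" by (simp only: dag_dag)
  have "(vnorm ?w)\<^sup>2 = cmod (ip v (E *\<^sub>v ?w))" unfolding eq[symmetric] of_real_power[symmetric] norm_of_real by simp
  also have "\<dots> \<le> vnorm v * vnorm (E *\<^sub>v ?w)" using v by (intro ip_cs) simp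
  also have "\<dots> \<le> vnorm v * (opnorm E * vnorm ?w)" using w by (intro mult_left_mono opnorm_bound) simp_all
  finally have *: "(vnorm ?w)\<^sup>2 \<le> opnorm E * vnorm v * vnorm ?w" by (simp add: ac_simps)
  show "vnorm ?w \<le> opnorm E * vnorm v"
  proof (cases "vnorm ?w = 0")
    case True then show ?thesis using opnorm_nonneg[of E] by simp
  next
    case False
    then have "vnorm ?w > 0" using vnorm_nonneg[of ?w] by linarith
    then show ?thesis using * by (simp add: power2_eq_square)
  qed
qed

lemma unitary_mult: assumes "is_unitary A" "is_unitary B" "dim_row A = n" "dim_row B = n"
  shows "is_unitary (A * B)"
proof -
  have A0: "A \<in> carrier_mat (dim_row A) (dim_row A) \<and> dag A * A = 1\<^sub>m (dim_row A)"
    using assms(1) unfolding is_unitary_def .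
  have B0: "B \<in> carrier_mat (dim_row B) (dim_row B) \<and> dag B * B = 1\<^sub>m (dim_row B)"
    using assms(2) unfolding is_unitary_def .
  have A: "A \<in> carrier_mat n n" "dag A * A = 1\<^sub>m n" using A0 unfolding assms(3) by auto
  have B: "B \<in> carrier_mat n n" "dag B * B = 1\<^sub>m n" using B0 unfolding assms(4) by auto
  have cA: "dim_col A = n" using A(1) by (rule carrier_matD(2))
  have cB: "dim_col B = n" using B(1) by (rule carrier_matD(2))
  have dA: "dag A \<in> carrier_mat n n" using dag_carrier[of A] unfolding cA assms(3) .
  have dB: "dag B \<in> carrier_mat n n" using dag_carrier[of B] unfolding cB assms(4) .
  have AB: "A * B \<in> carrier_mat n n" using A(1) B(1) by (rule mult_carrier_mat)
  have i1: "dag A * (A * B) = (dag A * A) * B" by (rule assoc_mult_mat[OF dA A(1) B(1), symmetric])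
  have i2: "(dag A * A) * B = B" unfolding A(2) using B(1) by (rule left_mult_one_mat)
  have "dag (A * B) * (A * B) = (dag B * dag A) * (A * B)" unfolding dag_mult[OF A(1) B(1)] ..
  also have "\<dots> = dag B * (dag A * (A * B))" by (rule assoc_mult_mat[OF dB dA AB])
  also have "\<dots> = dag B * B" unfolding i1 i2 ..
  finally have "dag (A * B) * (A * B) = 1\<^sub>m n" unfolding B(2) .
  moreover have "dim_row (A * B) = n" using AB by (rule carrier_matD)
  ultimately show ?thesis using AB unfolding is_unitary_def by metis
qed

lemma unitary_one: "is_unitary (1\<^sub>m n)" by (simp add: is_unitary_def)

lemma unitary_dag: assumes "is_unitary U" shows "is_unitary (dag U)"
proof -
  let ?n = "dim_row U"
  have U: "U \<in> carrier_mat ?n ?n" "dag U * U = 1\<^sub>m ?n" using assms unfolding is_unitary_def by blast+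
  have dU: "dag U \<in> carrier_mat ?n ?n" using dag_carrier[of U] U(1) by (metis carrier_matD)
  have "U * dag U = 1\<^sub>m ?n" by (rule mat_mult_left_right_inverse[OF dU U(1) U(2)])
  have cU: "dim_col U = ?n" using U(1) by (rule carrier_matD(2))
  have r: "dim_row (dag U) = ?n" using cU by simp
  have "dag (dag U) * dag U = 1\<^sub>m ?n" using \<open>U * dag U = 1\<^sub>m ?n\<close> by simp
  then show ?thesis using dU unfolding is_unitary_def r by blast
qed

definition KK :: "nat \<Rightarrow> nat \<Rightarrow> nat \<Rightarrow> nat" where "KK n M mA = 2^n * M * 2^mA"
definition enc :: "nat \<Rightarrow> nat \<Rightarrow> nat \<Rightarrow> nat \<Rightarrow> nat \<Rightarrow> nat \<Rightarrow> nat \<Rightarrow> nat" where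
  "enc n M mA a b j s = ((a * 2^mA + b) * M + j) * 2^n + s"

lemma sum_add_split: "(\<Sum>r<(a::nat)+b. f r) = (\<Sum>r<a. f r) + (\<Sum>y<b. f (a+y))"
  by (induction b) (simp_all add: ac_simps)

lemma sum_split: "(\<Sum>r<(p::nat)*q. f r) = (\<Sum>x<p. \<Sum>y<q. f (x*q + y))"
proof (induction p)
  case 0 then show ?case by simp
next
  case (Suc p)
  have "(\<Sum>r<Suc p * q. f r) = (\<Sum>r<p*q + q. f r)" by (simp add: ac_simps)
  also have "\<dots> = (\<Sum>r<p*q. f r) + (\<Sum>y<q. f (p*q+y))" by (rule sum_add_split)
  finally show ?case using Suc by simp
qed

lemma full_dim_KK: "full_dim n M mA = 4 * KK n M mA" by (simp add: full_dim_def KK_def ac_simps)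

lemma sum_full: "(\<Sum>q<full_dim n M mA. g q) = (\<Sum>a<4. \<Sum>b<2^mA. \<Sum>j<M. \<Sum>s<2^n. g (enc n M mA a b j s))"
proof -
  have "full_dim n M mA = ((4 * 2^mA) * M) * 2^n" by (simp add: full_dim_def)
  then have "(\<Sum>q<full_dim n M mA. g q) = (\<Sum>u<(4 * 2^mA) * M. \<Sum>s<2^n. g (u * 2^n + s))"
    by (simp add: sum_split)
  also have "\<dots> = (\<Sum>v<4 * 2^mA. \<Sum>j<M. \<Sum>s<2^n. g ((v * M + j) * 2^n + s))"
    by (simp add: sum_split)
  also have "\<dots> = (\<Sum>a<4. \<Sum>b<2^mA. \<Sum>j<M. \<Sum>s<2^n. g (((a * 2^mA + b) * M + j) * 2^n + s))"
    by (simp add: sum_split)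
  finally show ?thesis by (simp add: enc_def)
qed

lemma enc_idx:
  assumes "b < 2^mA" "j < M" "s < 2^n"
  shows "idx_s n M mA (enc n M mA a b j s) = s" "idx_j n M mA (enc n M mA a b j s) = j"
    "idx_b n M mA (enc n M mA a b j s) = b" "idx_a n M mA (enc n M mA a b j s) = a"
proof -
  let ?e = "enc n M mA a b j s"
  have d1: "?e div 2^n = (a * 2^mA + b) * M + j" using assms by (simp add: enc_def)
  have d2: "((a * 2^mA + b) * M + j) div M = a * 2^mA + b" using assms by simp
  have d3: "(a * 2^mA + b) div 2^mA = a" using assms by simp
  show "idx_s n M mA ?e = s" using assms by (simp add: idx_s_def enc_def)
  show "idx_j n M mA ?e = j" using assms d1 by (simp add: idx_j_def)
  show "idx_b n M mA ?e = b" using assms d1 d2 by (simp add: idx_b_def div_mult2_eq)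
  show "idx_a n M mA ?e = a" using assms d1 d2 d3 by (simp add: idx_a_def div_mult2_eq)
qed

lemma idx_bounds: assumes "r < full_dim n M mA"
  shows "idx_a n M mA r < 4" "idx_b n M mA r < 2^mA" "idx_j n M mA r < M" "idx_s n M mA r < 2^n"
proof -
  have Mpos: "M > 0" using assms by (cases "M = 0") (auto simp: full_dim_def)
  show "idx_a n M mA r < 4" using assms
    by (simp add: idx_a_def full_dim_def less_mult_imp_div_less ac_simps)
  show "idx_b n M mA r < 2^mA" by (simp add: idx_b_def)
  show "idx_j n M mA r < M" using Mpos by (simp add: idx_j_def)
  show "idx_s n M mA r < 2^n" by (simp add: idx_s_def)
qed

lemma idx_enc: "enc n M mA (idx_a n M mA r) (idx_b n M mA r) (idx_j n M mA r) (idx_s n M mA r) = r"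
proof -
  have e1: "(r div 2^n) * 2^n + r mod 2^n = r" by (rule div_mult_mod_eq)
  have e2: "((r div 2^n) div M) * M + (r div 2^n) mod M = r div 2^n" by (rule div_mult_mod_eq)
  have e3: "((r div 2^n) div M div 2^mA) * 2^mA + ((r div 2^n) div M) mod 2^mA = (r div 2^n) div M" by (rule div_mult_mod_eq)
  show ?thesis unfolding enc_def idx_a_def idx_b_def idx_j_def idx_s_def div_mult2_eq
    using e1 e2 e3 by metis
qed

lemma enc_bound: assumes "a < 4" "b < 2^mA" "j < M" "s < 2^n"
  shows "enc n M mA a b j s < full_dim n M mA"
proof -
  have "a * 2^mA + b < a * 2^mA + 2^mA" using assms by simp
  also have "\<dots> = (a + 1) * 2^mA" by simp
  also have "\<dots> \<le> 4 * 2^mA" using assms(1) by (intro mult_right_mono) auto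
  finally have "a * 2^mA + b + 1 \<le> 4 * 2^mA" by simp
  have h1: "(a * 2^mA + b) * M + j < (4 * 2^mA) * M"
  proof -
    have "(a * 2^mA + b) * M + j < (a * 2^mA + b) * M + M" using assms by simp
    also have "\<dots> = (a * 2^mA + b + 1) * M" by simp
    also have "\<dots> \<le> (4 * 2^mA) * M" using \<open>a * 2^mA + b + 1 \<le> 4 * 2^mA\<close> by (rule mult_right_mono) simp
    finally show ?thesis .
  qed
  then have "(a * 2^mA + b) * M + j + 1 \<le> (4 * 2^mA) * M" by simp
  have "((a * 2^mA + b) * M + j) * 2^n + s < ((a * 2^mA + b) * M + j) * 2^n + 2^n" using assms by simp
  also have "\<dots> = ((a * 2^mA + b) * M + j + 1) * 2^n" by simp
  also have "\<dots> \<le> ((4 * 2^mA) * M) * 2^n"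
    using \<open>(a * 2^mA + b) * M + j + 1 \<le> (4 * 2^mA) * M\<close> by (rule mult_right_mono) simp
  finally show ?thesis by (simp add: enc_def full_dim_def ac_simps)
qed

lemma idx_a_KK: "idx_a n M mA r = r div KK n M mA" by (simp add: idx_a_def KK_def)

lemma aK_enc: "a * KK n M mA + r = enc n M mA a 0 (r div 2^n) (r mod 2^n)"
proof -
  have "r = (r div 2^n) * 2^n + r mod 2^n" by (rule div_mult_mod_eq[symmetric])
  then show ?thesis unfolding enc_def KK_def by (simp add: algebra_simps)
qed

lemma aK_idx: assumes "a < 4" "r < M * 2^n"
  shows "idx_a n M mA (a * KK n M mA + r) = a" "idx_b n M mA (a * KK n M mA + r) = 0"
    "idx_j n M mA (a * KK n M mA + r) = r div 2^n" "idx_s n M mA (a * KK n M mA + r) = r mod 2^n"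
    "a * KK n M mA + r < full_dim n M mA"
proof -
  have j: "r div 2^n < M" using assms by (simp add: less_mult_imp_div_less)
  have s: "r mod 2^n < 2^n" by simp
  have b: "(0::nat) < 2^mA" by simp
  show "idx_a n M mA (a * KK n M mA + r) = a" "idx_b n M mA (a * KK n M mA + r) = 0"
    "idx_j n M mA (a * KK n M mA + r) = r div 2^n" "idx_s n M mA (a * KK n M mA + r) = r mod 2^n"
    unfolding aK_enc using enc_idx[OF b j s] by auto
  show "a * KK n M mA + r < full_dim n M mA" unfolding aK_enc using enc_bound[OF assms(1) b j s] .
qed

lemma mult_entry: "A \<in> carrier_mat nr m \<Longrightarrow> B \<in> carrier_mat m nc \<Longrightarrow> r < nr \<Longrightarrow> c < nc \<Longrightarrow>
   (A * B) $$ (r,c) = (\<Sum>i<m. A $$ (r,i) * B $$ (i,c))"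
  by (simp add: scalar_prod_def row_def col_def atLeast0LessThan)

lemma sum4: "(\<Sum>a<(4::nat). f a) = f 0 + f 1 + f 2 + f 3"
  by (simp add: eval_nat_numeral)

lemma less4: "x < (4::nat) \<longleftrightarrow> x = 0 \<or> x = 1 \<or> x = 2 \<or> x = 3" by auto
lemma all2: "(\<forall>t'<(2::nat). P t') = (P 0 \<and> P 1)" by (auto simp: less_2_cases_iff)

definition om :: "nat \<Rightarrow> complex mat \<Rightarrow> nat \<Rightarrow> nat \<Rightarrow> complex" where
  "om t W a a' = (if (\<forall>t'<2. t' \<noteq> t \<longrightarrow> abit t' a = abit t' a')
      then W $$ (if abit t a then 1 else 0, if abit t a' then 1 else 0) else 0)"

lemma on_anc_carrier[simp]: "on_anc n M mA t W \<in> carrier_mat (full_dim n M mA) (full_dim n M mA)"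
  by (simp add: on_anc_def)

lemma on_anc_entry: "r < full_dim n M mA \<Longrightarrow> c < full_dim n M mA \<Longrightarrow>
  on_anc n M mA t W $$ (r,c) = (if r mod KK n M mA = c mod KK n M mA then om t W (r div KK n M mA) (c div KK n M mA) else 0)"
  by (simp add: on_anc_def Let_def idx_a_def KK_def om_def)

lemma KK_pos: "M > 0 \<Longrightarrow> KK n M mA > 0" by (simp add: KK_def)

lemma on_anc_left:
  assumes M: "M > 0" and Z: "Z \<in> carrier_mat (full_dim n M mA) (full_dim n M mA)"
    and r: "r < full_dim n M mA" and c: "c < full_dim n M mA"
  shows "(on_anc n M mA t W * Z) $$ (r,c) =
     (\<Sum>a<4. om t W (r div KK n M mA) a * Z $$ (a * KK n M mA + r mod KK n M mA, c))"
proof -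
  let ?K = "KK n M mA"
  have Kp: "?K > 0" using M by (rule KK_pos)
  have "(on_anc n M mA t W * Z) $$ (r,c) = (\<Sum>i<4 * ?K. on_anc n M mA t W $$ (r,i) * Z $$ (i,c))"
    using mult_entry[OF on_anc_carrier Z r c] by (simp add: full_dim_KK)
  also have "\<dots> = (\<Sum>a<4. \<Sum>w<?K. on_anc n M mA t W $$ (r, a * ?K + w) * Z $$ (a * ?K + w, c))"
    by (rule sum_split)
  also have "\<dots> = (\<Sum>a<4. \<Sum>w<?K. if w = r mod ?K then om t W (r div ?K) a * Z $$ (a * ?K + w, c) else 0)"
  proof (intro sum.cong refl)
    fix a w assume a: "a \<in> {..<4::nat}" and w: "w \<in> {..<?K}"
    have lt: "a * ?K + w < full_dim n M mA"
    proof -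
      have "a * ?K + w < a * ?K + ?K" using w by simp
      also have "\<dots> = (a + 1) * ?K" by simp
      also have "\<dots> \<le> 4 * ?K" using a by (intro mult_right_mono) auto
      finally show ?thesis by (simp add: full_dim_KK)
    qed
    have m: "(a * ?K + w) mod ?K = w" "(a * ?K + w) div ?K = a" using w Kp by auto
    show "on_anc n M mA t W $$ (r, a * ?K + w) * Z $$ (a * ?K + w, c) =
          (if w = r mod ?K then om t W (r div ?K) a * Z $$ (a * ?K + w, c) else 0)"
      using on_anc_entry[OF r lt, of t W] m by auto
  qed
  also have "\<dots> = (\<Sum>a<4. om t W (r div ?K) a * Z $$ (a * ?K + r mod ?K, c))"
    using Kp by (simp add: sum.delta')
  finally show ?thesis .
qed

lemma on_anc_right:
  assumes M: "M > 0" and Z: "Z \<in> carrier_mat (full_dim n M mA) (full_dim n M mA)"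
    and r: "r < full_dim n M mA" and c: "c < full_dim n M mA"
  shows "(Z * on_anc n M mA t W) $$ (r,c) =
     (\<Sum>a<4. Z $$ (r, a * KK n M mA + c mod KK n M mA) * om t W a (c div KK n M mA))"
proof -
  let ?K = "KK n M mA"
  have Kp: "?K > 0" using M by (rule KK_pos)
  have "(Z * on_anc n M mA t W) $$ (r,c) = (\<Sum>i<4 * ?K. Z $$ (r,i) * on_anc n M mA t W $$ (i,c))"
    using mult_entry[OF Z on_anc_carrier r c] by (simp add: full_dim_KK)
  also have "\<dots> = (\<Sum>a<4. \<Sum>w<?K. Z $$ (r, a * ?K + w) * on_anc n M mA t W $$ (a * ?K + w, c))"
    by (rule sum_split)
  also have "\<dots> = (\<Sum>a<4. \<Sum>w<?K. if w = c mod ?K then Z $$ (r, a * ?K + w) * om t W a (c div ?K) else 0)"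
  proof (intro sum.cong refl)
    fix a w assume a: "a \<in> {..<4::nat}" and w: "w \<in> {..<?K}"
    have lt: "a * ?K + w < full_dim n M mA"
    proof -
      have "a * ?K + w < a * ?K + ?K" using w by simp
      also have "\<dots> = (a + 1) * ?K" by simp
      also have "\<dots> \<le> 4 * ?K" using a by (intro mult_right_mono) auto
      finally show ?thesis by (simp add: full_dim_KK)
    qed
    have m: "(a * ?K + w) mod ?K = w" "(a * ?K + w) div ?K = a" using w Kp by auto
    show "Z $$ (r, a * ?K + w) * on_anc n M mA t W $$ (a * ?K + w, c) =
          (if w = c mod ?K then Z $$ (r, a * ?K + w) * om t W a (c div ?K) else 0)"
      using on_anc_entry[OF lt c, of t W] m by auto
  qed
  also have "\<dots> = (\<Sum>a<4. Z $$ (r, a * ?K + c mod ?K) * om t W a (c div ?K))"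
    using Kp by (simp add: sum.delta')
  finally show ?thesis .
qed

lemma had_entries: "hadamard $$ (0,0) = 1 / sqrt 2" "hadamard $$ (0,1) = 1 / sqrt 2"
  "hadamard $$ (1,0) = 1 / sqrt 2" "hadamard $$ (1,1) = - 1 / sqrt 2"
  by (simp_all add: hadamard_def)

lemma sq2: "(complex_of_real (1 / sqrt 2)) * (complex_of_real (1 / sqrt 2)) = 1/2"
proof -
  have "(1 / sqrt 2) * (1 / sqrt 2) = (1/2::real)" by (simp add: divide_simps)
  then show ?thesis by (metis of_real_divide of_real_mult of_real_numeral of_real_1)
qed

lemma had_entries2: "hadamard $$ (Suc 0, 0) = 1 / sqrt 2" "hadamard $$ (0, Suc 0) = 1 / sqrt 2"
  "hadamard $$ (Suc 0, Suc 0) = - 1 / sqrt 2"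
  by (simp_all add: hadamard_def)

lemma sq2b: "complex_of_real (sqrt 2) * complex_of_real (sqrt 2) = 2"
  by (simp flip: of_real_mult)

lemma all4: "(\<forall>x<(4::nat). P x) = (P 0 \<and> P 1 \<and> P 2 \<and> P 3)"
  unfolding less4 by auto

lemma om_had_sq_all: "\<forall>t<2. \<forall>x<4. \<forall>y<4. (\<Sum>a<4. om t hadamard x a * om t hadamard a y) = (if x = y then 1 else 0)"
  unfolding all2 all4 om_def sum4 by (simp add: abit_def had_entries had_entries2 sq2 sq2b)

lemma om_had_sq: "t < 2 \<Longrightarrow> x < 4 \<Longrightarrow> y < 4 \<Longrightarrow>
   (\<Sum>a<4. om t hadamard x a * om t hadamard a y) = (if x = y then 1 else 0)"
  using om_had_sq_all by blast

lemma om_had_sym: "cnj (om t hadamard x y) = om t hadamard y x"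
  unfolding om_def by (auto simp: hadamard_def)

lemma divK_lt4: "r < full_dim n M mA \<Longrightarrow> r div KK n M mA < 4"
  by (simp add: full_dim_KK less_mult_imp_div_less)

lemma aK_lt: assumes "a < 4" "w < KK n M mA" shows "a * KK n M mA + w < full_dim n M mA"
proof -
  let ?K = "KK n M mA"
  have "a * ?K + w < a * ?K + ?K" using assms by simp
  also have "\<dots> = (a + 1) * ?K" by simp
  also have "\<dots> \<le> 4 * ?K" using assms by (intro mult_right_mono) auto
  finally show ?thesis by (simp add: full_dim_KK)
qed

lemma divmod_eq: "(r mod K = c mod K \<and> r div K = c div K) = (r = (c::nat))"
  by (metis div_mult_mod_eq)

lemma dag_had: "dag (on_anc n M mA t hadamard) = on_anc n M mA t hadamard"
proof (rule eq_matI)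
  fix i j assume "i < dim_row (on_anc n M mA t hadamard)" "j < dim_col (on_anc n M mA t hadamard)"
  then have i: "i < full_dim n M mA" and j: "j < full_dim n M mA" by (auto simp: on_anc_def)
  show "dag (on_anc n M mA t hadamard) $$ (i, j) = on_anc n M mA t hadamard $$ (i, j)"
  proof -
    have "dag (on_anc n M mA t hadamard) $$ (i, j) = cnj (on_anc n M mA t hadamard $$ (j, i))"
      using i j by (intro dag_index) (simp_all add: on_anc_def)
    also have "\<dots> = on_anc n M mA t hadamard $$ (i, j)"
      using i j by (simp add: on_anc_entry om_had_sym)
    finally show ?thesis .
  qed
qed (simp_all add: on_anc_def)

lemma had_unitary: assumes M: "M > 0" and t: "t < 2" shows "is_unitary (on_anc n M mA t hadamard)"
proof -
  let ?H = "on_anc n M mA t hadamard" and ?K = "KK n M mA" and ?N = "full_dim n M mA"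
  have Kp: "?K > 0" using M by (rule KK_pos)
  have "?H * ?H = 1\<^sub>m ?N"
  proof (rule eq_matI)
    fix r c assume "r < dim_row (1\<^sub>m ?N)" "c < dim_col (1\<^sub>m ?N)"
    then have r: "r < ?N" and c: "c < ?N" by auto
    have "(?H * ?H) $$ (r,c) = (\<Sum>a<4. om t hadamard (r div ?K) a * ?H $$ (a * ?K + r mod ?K, c))"
      by (rule on_anc_left[OF M on_anc_carrier r c])
    also have "\<dots> = (\<Sum>a<4. if r mod ?K = c mod ?K then om t hadamard (r div ?K) a * om t hadamard a (c div ?K) else 0)"
    proof (intro sum.cong refl)
      fix a assume a: "a \<in> {..<4::nat}"
      have lt: "a * ?K + r mod ?K < ?N" using a Kp by (intro aK_lt) auto
      have m: "(a * ?K + r mod ?K) mod ?K = r mod ?K" "(a * ?K + r mod ?K) div ?K = a" using Kp by auto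
      show "om t hadamard (r div ?K) a * ?H $$ (a * ?K + r mod ?K, c) =
        (if r mod ?K = c mod ?K then om t hadamard (r div ?K) a * om t hadamard a (c div ?K) else 0)"
      proof -
        have e: "?H $$ (a * ?K + r mod ?K, c) = (if r mod ?K = c mod ?K then om t hadamard a (c div ?K) else 0)"
          using on_anc_entry[OF lt c, of t hadamard] unfolding m .
        show ?thesis unfolding e by simp
      qed
    qed
    also have "\<dots> = (if r mod ?K = c mod ?K then (\<Sum>a<4. om t hadamard (r div ?K) a * om t hadamard a (c div ?K)) else 0)"
      by simp
    also have "\<dots> = (if r mod ?K = c mod ?K then (if r div ?K = c div ?K then 1 else 0) else 0)"
      unfolding om_had_sq[OF t divK_lt4[OF r] divK_lt4[OF c]] ..
    also have "\<dots> = (if r mod ?K = c mod ?K \<and> r div ?K = c div ?K then 1 else 0)" by simp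
    also have "\<dots> = 1\<^sub>m ?N $$ (r,c)" using r c by (simp add: divmod_eq)
    finally show "(?H * ?H) $$ (r,c) = 1\<^sub>m ?N $$ (r,c)" .
  qed (simp_all add: on_anc_def)
  then show ?thesis unfolding is_unitary_def dag_had by (simp add: on_anc_def)
qed

definition bs :: "nat \<Rightarrow> nat \<Rightarrow> nat \<Rightarrow> nat \<Rightarrow> nat" where
  "bs n M mA q = idx_b n M mA q * 2^n + idx_s n M mA q"

lemma bs_inj: assumes "(b::nat) * 2^n + s = b' * 2^n + s'" "s < 2^n" "s' < 2^n"
  shows "b = b'" "s = s'"
proof -
  have h1: "(b * 2^n + s) div 2^n = b" "(b' * 2^n + s') div 2^n = b'" using assms(2,3) by auto
  show "b = b'" using h1(1)[unfolded assms(1)] h1(2) by simp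
  have h2: "(b * 2^n + s) mod 2^n = s" "(b' * 2^n + s') mod 2^n = s'" using assms(2,3) by auto
  show "s = s'" using h2(1)[unfolded assms(1)] h2(2) by simp
qed

lemma bs_lt: assumes "(b::nat) < 2^mA" "s < 2^n" shows "b * 2^n + s < 2^mA * 2^n"
proof -
  have "b * 2^n + s < b * 2^n + 2^n" using assms by simp
  also have "\<dots> = (b + 1) * 2^n" by simp
  also have "\<dots> \<le> 2^mA * 2^n" using assms by (intro mult_right_mono) auto
  finally show ?thesis .
qed

lemma bs_bound: "q < full_dim n M mA \<Longrightarrow> bs n M mA q < 2^mA * 2^n"
  unfolding bs_def by (intro bs_lt idx_bounds) (auto simp: idx_bounds)

lemma eq_iff_bs: assumes "q < full_dim n M mA" "r < full_dim n M mA"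
  "idx_a n M mA q = idx_a n M mA r" "idx_j n M mA q = idx_j n M mA r"
  shows "(q = r) = (bs n M mA q = bs n M mA r)"
proof
  assume "bs n M mA q = bs n M mA r"
  then have "idx_b n M mA q = idx_b n M mA r" "idx_s n M mA q = idx_s n M mA r"
    using bs_inj[of "idx_b n M mA q" n "idx_s n M mA q" "idx_b n M mA r" "idx_s n M mA r"] idx_bounds[OF assms(1)] idx_bounds[OF assms(2)]
    unfolding bs_def by auto
  then show "q = r" using idx_enc[of n M mA q] idx_enc[of n M mA r] assms(3,4) by metis
qed simp

lemma ctrl_call_carrier[simp]: "ctrl_call n M mA c V \<in> carrier_mat (full_dim n M mA) (full_dim n M mA)"
  by (simp add: ctrl_call_def)

lemma ctrl_call_raw: assumes q: "q < full_dim n M mA" and r: "r < full_dim n M mA"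
  shows "ctrl_call n M mA c V $$ (q,r) = (if idx_a n M mA q = idx_a n M mA r \<and> idx_j n M mA q = idx_j n M mA r then
       (if ctrl_sat c (idx_a n M mA q) (idx_j n M mA q) then V $$ (bs n M mA q, bs n M mA r)
        else if q = r then 1 else 0) else 0)"
  unfolding ctrl_call_def bs_def using q r by (subst index_mat) simp_all

lemma ctrl_call_entry: assumes q: "q < full_dim n M mA" and r: "r < full_dim n M mA"
  shows "ctrl_call n M mA c V $$ (q,r) = (if idx_a n M mA q = idx_a n M mA r \<and> idx_j n M mA q = idx_j n M mA r
     then (if ctrl_sat c (idx_a n M mA q) (idx_j n M mA q) then V else 1\<^sub>m (2^mA * 2^n)) $$ (bs n M mA q, bs n M mA r) else 0)"
proof (cases "idx_a n M mA q = idx_a n M mA r \<and> idx_j n M mA q = idx_j n M mA r")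
  case True
  show ?thesis
  proof (cases "ctrl_sat c (idx_a n M mA q) (idx_j n M mA q)")
    case True2: True
    then show ?thesis using True unfolding ctrl_call_raw[OF q r] by simp
  next
    case False
    have e: "(q = r) = (bs n M mA q = bs n M mA r)" using True q r by (intro eq_iff_bs) auto
    have I: "1\<^sub>m (2^mA * 2^n) $$ (bs n M mA q, bs n M mA r) = (if bs n M mA q = bs n M mA r then 1 else 0)"
      using bs_bound[OF q] bs_bound[OF r] by simp
    have A: "(idx_a n M mA q = idx_a n M mA r \<and> idx_j n M mA q = idx_j n M mA r) = True" using True by simp
    have C: "ctrl_sat c (idx_a n M mA q) (idx_j n M mA q) = False" using False by simp
    show ?thesis unfolding ctrl_call_raw[OF q r] A C if_True if_False e I ..
  qed
next
  case False
  then have nf: "(idx_a n M mA q = idx_a n M mA r \<and> idx_j n M mA q = idx_j n M mA r) = False" by simp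
  show ?thesis unfolding ctrl_call_raw[OF q r] nf if_False ..
qed

lemma sum_if_const: "(\<Sum>x\<in>A. if P then f x else 0) = (if P then sum f A else 0)"
  by simp

lemma sum_collapse:
  assumes "a0 < (4::nat)" "j0 < (M::nat)"
  shows "(\<Sum>a<4. \<Sum>b<(B::nat). \<Sum>j<M. \<Sum>s<(S::nat). if a = a0 \<and> j = j0 then f a j b s else 0) = (\<Sum>b<B. \<Sum>s<S. f a0 j0 b s)"
proof -
  have "(\<Sum>a<4. \<Sum>b<B. \<Sum>j<M. \<Sum>s<S. if a = a0 \<and> j = j0 then f a j b s else 0)
     = (\<Sum>a<4. \<Sum>b<B. \<Sum>j<M. if a = a0 \<and> j = j0 then (\<Sum>s<S. f a j b s) else 0)"
    by (simp only: sum_if_const)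
  also have "\<dots> = (\<Sum>a<4. \<Sum>b<B. if a = a0 then (\<Sum>s<S. f a j0 b s) else 0)"
  proof (intro sum.cong refl)
    fix a b
    have "(\<Sum>j<M. if a = a0 \<and> j = j0 then (\<Sum>s<S. f a j b s) else 0) = (\<Sum>j<M. if j = j0 then (if a = a0 then (\<Sum>s<S. f a j b s) else 0) else 0)"
      by (intro sum.cong refl) auto
    also have "\<dots> = (if a = a0 then (\<Sum>s<S. f a j0 b s) else 0)" using assms by (subst sum.delta; simp)
    finally show "(\<Sum>j<M. if a = a0 \<and> j = j0 then (\<Sum>s<S. f a j b s) else 0) = (if a = a0 then (\<Sum>s<S. f a j0 b s) else 0)" .
  qed
  also have "\<dots> = (\<Sum>a<4. if a = a0 then (\<Sum>b<B. \<Sum>s<S. f a j0 b s) else 0)"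
    by (simp only: sum_if_const)
  also have "\<dots> = (\<Sum>b<B. \<Sum>s<S. f a0 j0 b s)" using assms by (subst sum.delta; simp)
  finally show ?thesis .
qed

lemma cnj_if_mult: "cnj (if P then A else 0) * (if Q then B else 0) = (if P then (if Q then cnj A * B else 0) else (0::complex))"
  by (cases P; cases Q) simp_all

lemma if_if_zero: "\<not> (P \<and> Q) \<Longrightarrow> (if P then (if Q then X else 0) else 0) = 0"
  by auto

lemma blk_unitary:
  fixes Gf :: "nat \<Rightarrow> nat \<Rightarrow> complex mat"
  assumes G: "\<And>a j. a < 4 \<Longrightarrow> j < M \<Longrightarrow> is_unitary (Gf a j) \<and> Gf a j \<in> carrier_mat (2^mA * 2^n) (2^mA * 2^n)"
  and X: "X = mat (full_dim n M mA) (full_dim n M mA) (\<lambda>(q,r).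
     if idx_a n M mA q = idx_a n M mA r \<and> idx_j n M mA q = idx_j n M mA r
     then Gf (idx_a n M mA q) (idx_j n M mA q) $$ (bs n M mA q, bs n M mA r) else 0)"
  shows "is_unitary X"
proof -
  let ?N = "full_dim n M mA" and ?D = "2^mA * 2^n"
  have Xc: "X \<in> carrier_mat ?N ?N" using X by simp
  have dimX: "dim_row X = ?N" "dim_col X = ?N" using X by simp_all
  have dX: "dag X \<in> carrier_mat ?N ?N" using X by (simp add: dag_def)
  have Xe: "\<And>q r. q < ?N \<Longrightarrow> r < ?N \<Longrightarrow> X $$ (q,r) = (if idx_a n M mA q = idx_a n M mA r \<and> idx_j n M mA q = idx_j n M mA r
     then Gf (idx_a n M mA q) (idx_j n M mA q) $$ (bs n M mA q, bs n M mA r) else 0)"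
    unfolding X by (subst index_mat) simp_all
  have "dag X * X = 1\<^sub>m ?N"
  proof (rule eq_matI)
    fix r c assume "r < dim_row (1\<^sub>m ?N)" "c < dim_col (1\<^sub>m ?N)"
    then have r: "r < ?N" and c: "c < ?N" by auto
    note br = idx_bounds[OF r] and bc = idx_bounds[OF c]
    have "(dag X * X) $$ (r,c) = (\<Sum>q<?N. dag X $$ (r,q) * X $$ (q,c))"
      by (rule mult_entry[OF dX Xc r c])
    also have "\<dots> = (\<Sum>q<?N. cnj (X $$ (q,r)) * X $$ (q,c))"
      using r by (intro sum.cong refl dag_index) (simp_all add: dimX)
    also have "\<dots> = (\<Sum>a<4. \<Sum>b<2^mA. \<Sum>j<M. \<Sum>s<2^n.
        cnj (X $$ (enc n M mA a b j s, r)) * X $$ (enc n M mA a b j s, c))"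
      by (rule sum_full)
    also have "\<dots> = (\<Sum>a<4. \<Sum>b<2^mA. \<Sum>j<M. \<Sum>s<2^n.
        if a = idx_a n M mA r \<and> j = idx_j n M mA r then
          (if a = idx_a n M mA c \<and> j = idx_j n M mA c then
             cnj (Gf a j $$ (b * 2^n + s, bs n M mA r)) * Gf a j $$ (b * 2^n + s, bs n M mA c) else 0) else 0)"
    proof (intro sum.cong refl)
      fix a b j s assume a: "a \<in> {..<4::nat}" and b: "b \<in> {..<2^mA::nat}" and j: "j \<in> {..<M}" and s: "s \<in> {..<2^n::nat}"
      have e: "enc n M mA a b j s < ?N" using a b j s by (intro enc_bound) auto
      have ix: "idx_a n M mA (enc n M mA a b j s) = a" "idx_j n M mA (enc n M mA a b j s) = j"
        "bs n M mA (enc n M mA a b j s) = b * 2^n + s"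
        using enc_idx[of b mA j M s n a] b j s by (auto simp: bs_def)
      show "cnj (X $$ (enc n M mA a b j s, r)) * X $$ (enc n M mA a b j s, c) =
        (if a = idx_a n M mA r \<and> j = idx_j n M mA r then
          (if a = idx_a n M mA c \<and> j = idx_j n M mA c then
             cnj (Gf a j $$ (b * 2^n + s, bs n M mA r)) * Gf a j $$ (b * 2^n + s, bs n M mA c) else 0) else 0)"
        unfolding Xe[OF e r] Xe[OF e c] ix by (rule cnj_if_mult)
    qed
    also have "\<dots> = 1\<^sub>m ?N $$ (r,c)"
    proof (cases "idx_a n M mA r = idx_a n M mA c \<and> idx_j n M mA r = idx_j n M mA c")
      case False
      then have rc: "r \<noteq> c" by auto
      have nf: "(idx_a n M mA r = idx_a n M mA c \<and> idx_j n M mA r = idx_j n M mA c) = False" using False by simp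
      have "(\<Sum>a<4. \<Sum>b<2^mA. \<Sum>j<M. \<Sum>s<2^n.
        if a = idx_a n M mA r \<and> j = idx_j n M mA r then
          (if a = idx_a n M mA c \<and> j = idx_j n M mA c then
             cnj (Gf a j $$ (b * 2^n + s, bs n M mA r)) * Gf a j $$ (b * 2^n + s, bs n M mA c) else 0) else 0) = 0"
      proof (intro sum.neutral ballI)
        fix a b j s
        have "\<not> ((a = idx_a n M mA r \<and> j = idx_j n M mA r) \<and> (a = idx_a n M mA c \<and> j = idx_j n M mA c))"
          using False by auto
        then show "(if a = idx_a n M mA r \<and> j = idx_j n M mA r then
          (if a = idx_a n M mA c \<and> j = idx_j n M mA c then
             cnj (Gf a j $$ (b * 2^n + s, bs n M mA r)) * Gf a j $$ (b * 2^n + s, bs n M mA c) else 0) else 0) = 0"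
          by (rule if_if_zero)
      qed
      also have "(0::complex) = 1\<^sub>m ?N $$ (r,c)" using rc r c by simp
      finally show ?thesis .
    next
      case True
      let ?G = "Gf (idx_a n M mA r) (idx_j n M mA r)"
      have tt: "(idx_a n M mA r = idx_a n M mA c \<and> idx_j n M mA r = idx_j n M mA c) = True" using True by simp
      have Gu: "is_unitary ?G" and Gc: "?G \<in> carrier_mat ?D ?D" using G br by auto
      have dG: "dag ?G \<in> carrier_mat ?D ?D" using Gc dag_carrier[of ?G] by (metis carrier_matD)
      have GG0: "?G \<in> carrier_mat (dim_row ?G) (dim_row ?G) \<and> dag ?G * ?G = 1\<^sub>m (dim_row ?G)"
        using Gu unfolding is_unitary_def .
      have rG: "dim_row ?G = ?D" using Gc by (rule carrier_matD(1))
      have GG: "dag ?G * ?G = 1\<^sub>m ?D" using GG0 unfolding rG by (rule conjunct2)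
      have "(\<Sum>a<4. \<Sum>b<2^mA. \<Sum>j<M. \<Sum>s<2^n.
        if a = idx_a n M mA r \<and> j = idx_j n M mA r then
          (if a = idx_a n M mA c \<and> j = idx_j n M mA c then
             cnj (Gf a j $$ (b * 2^n + s, bs n M mA r)) * Gf a j $$ (b * 2^n + s, bs n M mA c) else 0) else 0)
        = (\<Sum>b<2^mA. \<Sum>s<2^n. (if idx_a n M mA r = idx_a n M mA c \<and> idx_j n M mA r = idx_j n M mA c then
             cnj (?G $$ (b * 2^n + s, bs n M mA r)) * ?G $$ (b * 2^n + s, bs n M mA c) else 0))"
        by (rule sum_collapse[OF br(1) br(3), where f = "\<lambda>a j b s. if a = idx_a n M mA c \<and> j = idx_j n M mA c then
             cnj (Gf a j $$ (b * 2^n + s, bs n M mA r)) * Gf a j $$ (b * 2^n + s, bs n M mA c) else 0"])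
      also have "\<dots> = (\<Sum>b<2^mA. \<Sum>s<2^n. cnj (?G $$ (b * 2^n + s, bs n M mA r)) * ?G $$ (b * 2^n + s, bs n M mA c))"
        unfolding tt if_True ..
      also have "\<dots> = (\<Sum>p<?D. cnj (?G $$ (p, bs n M mA r)) * ?G $$ (p, bs n M mA c))"
        by (rule sum_split[symmetric])
      also have "\<dots> = (dag ?G * ?G) $$ (bs n M mA r, bs n M mA c)"
      proof -
        have "(dag ?G * ?G) $$ (bs n M mA r, bs n M mA c) = (\<Sum>p<?D. dag ?G $$ (bs n M mA r, p) * ?G $$ (p, bs n M mA c))"
          by (rule mult_entry[OF dG Gc bs_bound[OF r] bs_bound[OF c]])
        also have "\<dots> = (\<Sum>p<?D. cnj (?G $$ (p, bs n M mA r)) * ?G $$ (p, bs n M mA c))"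
        proof (intro sum.cong refl)
          fix p :: nat assume p: "p \<in> {..<?D}"
          have "dag ?G $$ (bs n M mA r, p) = cnj (?G $$ (p, bs n M mA r))"
            using Gc bs_bound[OF r] p by (intro dag_index) (simp_all add: carrier_matD)
          then show "dag ?G $$ (bs n M mA r, p) * ?G $$ (p, bs n M mA c) = cnj (?G $$ (p, bs n M mA r)) * ?G $$ (p, bs n M mA c)"
            by simp
        qed
        finally show ?thesis by simp
      qed
      also have "\<dots> = (if bs n M mA r = bs n M mA c then 1 else 0)"
        unfolding GG using bs_bound[OF r] bs_bound[OF c] by simp
      also have "\<dots> = 1\<^sub>m ?N $$ (r,c)" using eq_iff_bs[OF r c] True r c by simp
      finally show ?thesis .
    qed
    finally show "(dag X * X) $$ (r,c) = 1\<^sub>m ?N $$ (r,c)" .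
  qed (simp_all add: dimX)
  then show ?thesis unfolding is_unitary_def dimX using Xc by simp
qed

lemma ctrl_call_unitary:
  assumes V: "is_unitary V" "V \<in> carrier_mat (2^mA * 2^n) (2^mA * 2^n)"
  shows "is_unitary (ctrl_call n M mA c V)"
proof (rule blk_unitary[where Gf = "\<lambda>a j. if ctrl_sat c a j then V else 1\<^sub>m (2^mA * 2^n)"])
  fix a j show "is_unitary (if ctrl_sat c a j then V else 1\<^sub>m (2^mA * 2^n)) \<and>
       (if ctrl_sat c a j then V else 1\<^sub>m (2^mA * 2^n)) \<in> carrier_mat (2^mA * 2^n) (2^mA * 2^n)"
    using V unitary_one by auto
next
  show "ctrl_call n M mA c V = mat (full_dim n M mA) (full_dim n M mA) (\<lambda>(q,r).
     if idx_a n M mA q = idx_a n M mA r \<and> idx_j n M mA q = idx_j n M mA r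
     then (if ctrl_sat c (idx_a n M mA q) (idx_j n M mA q) then V else 1\<^sub>m (2^mA * 2^n)) $$ (bs n M mA q, bs n M mA r) else 0)"
  proof (rule eq_matI)
    fix i j assume "i < dim_row (mat (full_dim n M mA) (full_dim n M mA) (\<lambda>(q,r).
     if idx_a n M mA q = idx_a n M mA r \<and> idx_j n M mA q = idx_j n M mA r
     then (if ctrl_sat c (idx_a n M mA q) (idx_j n M mA q) then V else 1\<^sub>m (2^mA * 2^n)) $$ (bs n M mA q, bs n M mA r) else 0))"
      "j < dim_col (mat (full_dim n M mA) (full_dim n M mA) (\<lambda>(q,r).
     if idx_a n M mA q = idx_a n M mA r \<and> idx_j n M mA q = idx_j n M mA r
     then (if ctrl_sat c (idx_a n M mA q) (idx_j n M mA q) then V else 1\<^sub>m (2^mA * 2^n)) $$ (bs n M mA q, bs n M mA r) else 0))"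
    then have i: "i < full_dim n M mA" and j: "j < full_dim n M mA" by auto
    show "ctrl_call n M mA c V $$ (i, j) = mat (full_dim n M mA) (full_dim n M mA) (\<lambda>(q,r).
     if idx_a n M mA q = idx_a n M mA r \<and> idx_j n M mA q = idx_j n M mA r
     then (if ctrl_sat c (idx_a n M mA q) (idx_j n M mA q) then V else 1\<^sub>m (2^mA * 2^n)) $$ (bs n M mA q, bs n M mA r) else 0) $$ (i,j)"
      unfolding ctrl_call_entry[OF i j] using i j by (subst index_mat) simp_all
  qed (simp_all add: ctrl_call_def)
qed

definition rzph :: "ctrl \<Rightarrow> nat \<Rightarrow> real \<Rightarrow> nat \<Rightarrow> nat \<Rightarrow> complex" where
  "rzph c t \<phi> a j = (if ctrl_sat c a j then (if abit t a then cis (\<phi>/2) else cis (- \<phi>/2)) else 1)"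

lemma rz_entries: "rz \<phi> $$ (0,0) = cis (- \<phi>/2)" "rz \<phi> $$ (Suc 0, Suc 0) = cis (\<phi>/2)"
  "rz \<phi> $$ (0, Suc 0) = 0" "rz \<phi> $$ (Suc 0, 0) = 0"
  "rz \<phi> $$ (1, 1) = cis (\<phi>/2)" "rz \<phi> $$ (0, 1) = 0" "rz \<phi> $$ (1, 0) = 0"
  by (simp_all add: rz_def)

lemma om_rz_all: "\<forall>t<2. \<forall>x<4. \<forall>y<4. om t (rz \<phi>) x y = (if x = y then (if abit t x then cis (\<phi>/2) else cis (- \<phi>/2)) else 0)"
  unfolding all2 all4 om_def by (simp add: abit_def rz_entries)

lemma om_rz: "t < 2 \<Longrightarrow> x < 4 \<Longrightarrow> y < 4 \<Longrightarrow>
  om t (rz \<phi>) x y = (if x = y then (if abit t x then cis (\<phi>/2) else cis (- \<phi>/2)) else 0)"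
  using om_rz_all by blast

lemma rz_ideal_carrier[simp]: "rz_ideal n M mA c t \<phi> \<in> carrier_mat (full_dim n M mA) (full_dim n M mA)"
  by (simp add: rz_ideal_def)

lemma rz_entry: assumes t: "t < 2" and q: "q < full_dim n M mA" and q': "q' < full_dim n M mA"
  shows "rz_ideal n M mA c t \<phi> $$ (q,q') = (if q = q' then rzph c t \<phi> (idx_a n M mA q) (idx_j n M mA q) else 0)"
proof -
  let ?K = "KK n M mA"
  have raw: "rz_ideal n M mA c t \<phi> $$ (q,q') = (if ctrl_sat c (idx_a n M mA q) (idx_j n M mA q)
      then on_anc n M mA t (rz \<phi>) $$ (q, q') else if q = q' then 1 else 0)"
    unfolding rz_ideal_def using q q' by (subst index_mat) simp_all
  have oa: "on_anc n M mA t (rz \<phi>) $$ (q, q') = (if q = q' then (if abit t (idx_a n M mA q) then cis (\<phi>/2) else cis (- \<phi>/2)) else 0)"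
  proof -
    have "on_anc n M mA t (rz \<phi>) $$ (q, q') = (if q mod ?K = q' mod ?K then om t (rz \<phi>) (q div ?K) (q' div ?K) else 0)"
      by (rule on_anc_entry[OF q q'])
    also have "\<dots> = (if q mod ?K = q' mod ?K then (if q div ?K = q' div ?K then (if abit t (q div ?K) then cis (\<phi>/2) else cis (- \<phi>/2)) else 0) else 0)"
      unfolding om_rz[OF t divK_lt4[OF q] divK_lt4[OF q']] ..
    also have "\<dots> = (if q = q' then (if abit t (q div ?K) then cis (\<phi>/2) else cis (- \<phi>/2)) else 0)"
      using divmod_eq[of q ?K q'] by auto
    finally show ?thesis by (simp add: idx_a_KK)
  qed
  show ?thesis unfolding raw oa rzph_def by auto
qed

lemma diag_left:
  assumes X: "X \<in> carrier_mat N N" and Xe: "\<And>q q'. q < N \<Longrightarrow> q' < N \<Longrightarrow> X $$ (q,q') = (if q = q' then p q else 0)"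
    and Z: "Z \<in> carrier_mat N nc" and q: "q < N" and c: "c < nc"
  shows "(X * Z) $$ (q,c) = p q * Z $$ (q,c)"
proof -
  have "(X * Z) $$ (q,c) = (\<Sum>i<N. X $$ (q,i) * Z $$ (i,c))" by (rule mult_entry[OF X Z q c])
  also have "\<dots> = (\<Sum>i<N. if q = i then p q * Z $$ (i,c) else 0)"
    using q by (intro sum.cong refl) (simp add: Xe)
  also have "\<dots> = p q * Z $$ (q,c)" using q by (subst sum.delta'; simp)
  finally show ?thesis .
qed

lemma diag_unitary:
  assumes X: "X \<in> carrier_mat N N" and Xe: "\<And>q q'. q < N \<Longrightarrow> q' < N \<Longrightarrow> X $$ (q,q') = (if q = q' then p q else 0)"
    and p: "\<And>q. q < N \<Longrightarrow> cmod (p q) = 1"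
  shows "is_unitary X"
proof -
  have rX: "dim_row X = N" "dim_col X = N" using X by (simp_all add: carrier_matD)
  have dX: "dag X \<in> carrier_mat N N" using dag_carrier[of X] unfolding rX .
  have dXe: "\<And>q q'. q < N \<Longrightarrow> q' < N \<Longrightarrow> dag X $$ (q,q') = (if q = q' then cnj (p q) else 0)"
  proof -
    fix q q' assume "q < N" "q' < N"
    then have "dag X $$ (q,q') = cnj (X $$ (q',q))" by (intro dag_index) (simp_all add: rX)
    then show "dag X $$ (q,q') = (if q = q' then cnj (p q) else 0)" using \<open>q < N\<close> \<open>q' < N\<close> by (simp add: Xe)
  qed
  have "dag X * X = 1\<^sub>m N"
  proof (rule eq_matI)
    fix r c assume "r < dim_row (1\<^sub>m N)" "c < dim_col (1\<^sub>m N)"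
    then have r: "r < N" and c: "c < N" by auto
    have "(dag X * X) $$ (r,c) = cnj (p r) * X $$ (r,c)" by (rule diag_left[OF dX dXe X r c])
    also have "\<dots> = (if r = c then cnj (p r) * p r else 0)" using r c by (simp add: Xe)
    also have "cnj (p r) * p r = 1"
    proof -
      have "cnj (p r) * p r = complex_of_real ((cmod (p r))\<^sup>2)" by (metis complex_norm_square mult.commute)
      then show ?thesis using p[OF r] by simp
    qed
    finally show "(dag X * X) $$ (r,c) = 1\<^sub>m N $$ (r,c)" using r c by simp
  qed (simp_all add: rX)
  then show ?thesis unfolding is_unitary_def rX using X by simp
qed

lemma rz_unitary: assumes "t < 2" shows "is_unitary (rz_ideal n M mA c t \<phi>)"
  by (rule diag_unitary[OF rz_ideal_carrier rz_entry[OF assms]]) (auto simp: rzph_def)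

lemma circ_nil: "circuit_mat n M mA UA R [] = 1\<^sub>m (full_dim n M mA)"
  by (simp add: circuit_mat_def)

lemma circ_snoc: "circuit_mat n M mA UA R (xs @ [g]) = gate_mat n M mA UA R g * circuit_mat n M mA UA R xs"
  by (simp add: circuit_mat_def)

lemma circ_carrier:
  assumes "\<forall>g\<in>set gs. gate_mat n M mA UA R g \<in> carrier_mat (full_dim n M mA) (full_dim n M mA)"
  shows "circuit_mat n M mA UA R gs \<in> carrier_mat (full_dim n M mA) (full_dim n M mA)"
  using assms
proof (induction gs rule: rev_induct)
  case Nil then show ?case by (simp add: circ_nil)
next
  case (snoc x xs)
  then show ?case unfolding circ_snoc by (intro mult_carrier_mat) auto
qed

lemma foldl_gen:
  assumes "\<forall>g\<in>set ys. gate_mat n M mA UA R g \<in> carrier_mat (full_dim n M mA) (full_dim n M mA)"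
    and X: "X \<in> carrier_mat (full_dim n M mA) (full_dim n M mA)"
  shows "foldl (\<lambda>acc g. gate_mat n M mA UA R g * acc) X ys = circuit_mat n M mA UA R ys * X"
  using assms(1)
proof (induction ys rule: rev_induct)
  case Nil then show ?case using X by (simp add: circ_nil)
next
  case (snoc x xs)
  have G: "gate_mat n M mA UA R x \<in> carrier_mat (full_dim n M mA) (full_dim n M mA)" using snoc by auto
  have C: "circuit_mat n M mA UA R xs \<in> carrier_mat (full_dim n M mA) (full_dim n M mA)"
    using snoc by (intro circ_carrier) auto
  have "foldl (\<lambda>acc g. gate_mat n M mA UA R g * acc) X (xs @ [x]) =
        gate_mat n M mA UA R x * (circuit_mat n M mA UA R xs * X)" using snoc by simp
  also have "\<dots> = (gate_mat n M mA UA R x * circuit_mat n M mA UA R xs) * X"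
    by (rule assoc_mult_mat[OF G C X, symmetric])
  finally show ?case unfolding circ_snoc .
qed

lemma circ_append:
  assumes "\<forall>g\<in>set (xs @ ys). gate_mat n M mA UA R g \<in> carrier_mat (full_dim n M mA) (full_dim n M mA)"
  shows "circuit_mat n M mA UA R (xs @ ys) = circuit_mat n M mA UA R ys * circuit_mat n M mA UA R xs"
proof -
  have C: "circuit_mat n M mA UA R xs \<in> carrier_mat (full_dim n M mA) (full_dim n M mA)"
    using assms by (intro circ_carrier) auto
  have "circuit_mat n M mA UA R (xs @ ys) = foldl (\<lambda>acc g. gate_mat n M mA UA R g * acc) (circuit_mat n M mA UA R xs) ys"
    by (simp add: circuit_mat_def)
  also have "\<dots> = circuit_mat n M mA UA R ys * circuit_mat n M mA UA R xs"
    using assms C by (intro foldl_gen) auto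
  finally show ?thesis .
qed

lemma circ_unitary:
  assumes "\<forall>g\<in>set gs. is_unitary (gate_mat n M mA UA R g) \<and> gate_mat n M mA UA R g \<in> carrier_mat (full_dim n M mA) (full_dim n M mA)"
  shows "is_unitary (circuit_mat n M mA UA R gs)"
  using assms
proof (induction gs rule: rev_induct)
  case Nil then show ?case by (simp add: circ_nil unitary_one)
next
  case (snoc x xs)
  have C: "circuit_mat n M mA UA R xs \<in> carrier_mat (full_dim n M mA) (full_dim n M mA)"
    using snoc.prems by (intro circ_carrier) auto
  have G: "gate_mat n M mA UA R x \<in> carrier_mat (full_dim n M mA) (full_dim n M mA)" using snoc.prems by auto
  show ?case unfolding circ_snoc
    by (rule unitary_mult[where n = "full_dim n M mA"]) (use snoc C G in \<open>auto simp: carrier_matD\<close>)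
qed

lemma opnorm_zero_diff: fixes A :: "complex mat" assumes "A \<in> carrier_mat nr nc" shows "opnorm (A - A) \<le> 0"
proof (rule opnorm_le)
  fix v :: "complex vec" assume v: "v \<in> carrier_vec (dim_col (A - A))"
  have "vnorm ((A - A) *\<^sub>v v) = 0" using assms v
    by (simp add: vnorm_def scalar_prod_def row_def)
  then show "vnorm ((A - A) *\<^sub>v v) \<le> 0 * vnorm v" by simp
qed simp

lemma mat_tele:
  fixes G G' C C' :: "complex mat"
  assumes "G \<in> carrier_mat N N" "G' \<in> carrier_mat N N" "C \<in> carrier_mat N N" "C' \<in> carrier_mat N N"
  shows "G * C - G' * C' = G * (C - C') + (G - G') * C'"
proof (rule eq_matI)
  fix i j assume "i < dim_row (G * (C - C') + (G - G') * C')" "j < dim_col (G * (C - C') + (G - G') * C')"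
  then have i: "i < N" and j: "j < N" using assms by auto
  have CC: "C - C' \<in> carrier_mat N N" "G - G' \<in> carrier_mat N N" using assms by auto
  have "(G * C - G' * C') $$ (i,j) = (G * C) $$ (i,j) - (G' * C') $$ (i,j)" using assms i j by simp
  also have "\<dots> = (\<Sum>k<N. G $$ (i,k) * C $$ (k,j)) - (\<Sum>k<N. G' $$ (i,k) * C' $$ (k,j))"
    using mult_entry[OF assms(1) assms(3) i j] mult_entry[OF assms(2) assms(4) i j] by simp
  also have "\<dots> = (\<Sum>k<N. G $$ (i,k) * (C $$ (k,j) - C' $$ (k,j))) + (\<Sum>k<N. (G $$ (i,k) - G' $$ (i,k)) * C' $$ (k,j))"
    by (simp add: algebra_simps sum.distrib sum_subtractf)
  also have "\<dots> = (\<Sum>k<N. G $$ (i,k) * (C - C') $$ (k,j)) + (\<Sum>k<N. (G - G') $$ (i,k) * C' $$ (k,j))"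
    using assms i j by (intro arg_cong2[where f = "(+)"] sum.cong refl) auto
  also have "\<dots> = (G * (C - C')) $$ (i,j) + ((G - G') * C') $$ (i,j)"
    using mult_entry[OF assms(1) CC(1) i j] mult_entry[OF CC(2) assms(4) i j] by simp
  also have "\<dots> = (G * (C - C') + (G - G') * C') $$ (i,j)" using assms i j by simp
  finally show "(G * C - G' * C') $$ (i,j) = (G * (C - C') + (G - G') * C') $$ (i,j)" .
qed (use assms in auto)

lemma circ_err:
  assumes "\<forall>g\<in>set gs. gate_mat n M mA UA R g \<in> carrier_mat (full_dim n M mA) (full_dim n M mA) \<and>
     gate_mat n M mA UA R' g \<in> carrier_mat (full_dim n M mA) (full_dim n M mA) \<and>
     is_unitary (gate_mat n M mA UA R g) \<and> is_unitary (gate_mat n M mA UA R' g) \<and>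
     opnorm (gate_mat n M mA UA R g - gate_mat n M mA UA R' g) \<le> (if is_RZ g then \<epsilon> else 0)"
  shows "opnorm (circuit_mat n M mA UA R gs - circuit_mat n M mA UA R' gs) \<le> \<epsilon> * real (length (filter is_RZ gs))"
  using assms
proof (induction gs rule: rev_induct)
  case Nil
  have "opnorm (1\<^sub>m (full_dim n M mA) - 1\<^sub>m (full_dim n M mA)) \<le> 0"
    by (rule opnorm_zero_diff[of _ "full_dim n M mA" "full_dim n M mA"]) simp
  then show ?case by (simp add: circ_nil)
next
  case (snoc x xs)
  let ?N = "full_dim n M mA"
  let ?G = "gate_mat n M mA UA R x" and ?G' = "gate_mat n M mA UA R' x"
  let ?C = "circuit_mat n M mA UA R xs" and ?C' = "circuit_mat n M mA UA R' xs"
  have G: "?G \<in> carrier_mat ?N ?N" "?G' \<in> carrier_mat ?N ?N" "is_unitary ?G"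
    and Ge: "opnorm (?G - ?G') \<le> (if is_RZ x then \<epsilon> else 0)" using snoc.prems by auto
  have C: "?C \<in> carrier_mat ?N ?N" "?C' \<in> carrier_mat ?N ?N" using snoc.prems by (auto intro!: circ_carrier)
  have C'u: "is_unitary ?C'" using snoc.prems by (intro circ_unitary) auto
  have IH: "opnorm (?C - ?C') \<le> \<epsilon> * real (length (filter is_RZ xs))" using snoc by auto
  have "opnorm (circuit_mat n M mA UA R (xs @ [x]) - circuit_mat n M mA UA R' (xs @ [x]))
      = opnorm (?G * (?C - ?C') + (?G - ?G') * ?C')"
    unfolding circ_snoc mat_tele[OF G(1,2) C] ..
  also have "\<dots> \<le> opnorm (?G * (?C - ?C')) + opnorm ((?G - ?G') * ?C')"
    using G C by (intro opnorm_add[where nr = ?N and nc = ?N]) auto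
  also have "\<dots> \<le> opnorm ?G * opnorm (?C - ?C') + opnorm (?G - ?G') * opnorm ?C'"
    using G C by (intro add_mono opnorm_mult[where m = ?N]) auto
  also have "\<dots> \<le> 1 * opnorm (?C - ?C') + opnorm (?G - ?G') * 1"
    using unitary_opnorm[OF G(3)] unitary_opnorm[OF C'u] opnorm_nonneg[of "?C - ?C'"] opnorm_nonneg[of "?G - ?G'"]
    by (intro add_mono mult_right_mono mult_left_mono) auto
  also have "\<dots> \<le> \<epsilon> * real (length (filter is_RZ xs)) + (if is_RZ x then \<epsilon> else 0)"
    using IH Ge by simp
  also have "\<dots> = \<epsilon> * real (length (filter is_RZ (xs @ [x])))" by (simp add: algebra_simps)
  finally show ?case .
qed

fun gph :: "gate \<Rightarrow> nat \<Rightarrow> nat \<Rightarrow> complex" where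
  "gph (G_RZ c t \<phi>) a j = rzph c t \<phi> a j"
| "gph _ a j = 1"

lemma rz_circ_diag:
  assumes "\<forall>g\<in>set gs. is_RZ g \<and> valid_gate g"
  shows "circuit_mat n M mA UA (rz_ideal n M mA) gs \<in> carrier_mat (full_dim n M mA) (full_dim n M mA) \<and>
    (\<forall>q<full_dim n M mA. \<forall>q'<full_dim n M mA. circuit_mat n M mA UA (rz_ideal n M mA) gs $$ (q,q') =
       (if q = q' then prod_list (map (\<lambda>g. gph g (idx_a n M mA q) (idx_j n M mA q)) gs) else 0))"
  using assms
proof (induction gs rule: rev_induct)
  case Nil then show ?case by (simp add: circ_nil)
next
  case (snoc x xs)
  let ?N = "full_dim n M mA"
  obtain c t \<phi> where x: "x = G_RZ c t \<phi>" and t: "t < 2" using snoc.prems by (cases x) auto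
  have IH: "circuit_mat n M mA UA (rz_ideal n M mA) xs \<in> carrier_mat ?N ?N"
    "\<And>q q'. q < ?N \<Longrightarrow> q' < ?N \<Longrightarrow> circuit_mat n M mA UA (rz_ideal n M mA) xs $$ (q,q') =
       (if q = q' then prod_list (map (\<lambda>g. gph g (idx_a n M mA q) (idx_j n M mA q)) xs) else 0)"
    using snoc by auto
  have gm: "gate_mat n M mA UA (rz_ideal n M mA) x = rz_ideal n M mA c t \<phi>" by (simp add: x)
  show ?case
  proof
    show "circuit_mat n M mA UA (rz_ideal n M mA) (xs @ [x]) \<in> carrier_mat ?N ?N"
      unfolding circ_snoc gm using IH(1) by (intro mult_carrier_mat) auto
    show "\<forall>q<?N. \<forall>q'<?N. circuit_mat n M mA UA (rz_ideal n M mA) (xs @ [x]) $$ (q,q') =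
       (if q = q' then prod_list (map (\<lambda>g. gph g (idx_a n M mA q) (idx_j n M mA q)) (xs @ [x])) else 0)"
    proof (intro allI impI)
      fix q q' assume q: "q < ?N" and q': "q' < ?N"
      have "circuit_mat n M mA UA (rz_ideal n M mA) (xs @ [x]) $$ (q,q') =
         rzph c t \<phi> (idx_a n M mA q) (idx_j n M mA q) * circuit_mat n M mA UA (rz_ideal n M mA) xs $$ (q,q')"
        unfolding circ_snoc gm by (rule diag_left[OF rz_ideal_carrier rz_entry[OF t] IH(1) q q'])
      then show "circuit_mat n M mA UA (rz_ideal n M mA) (xs @ [x]) $$ (q,q') =
       (if q = q' then prod_list (map (\<lambda>g. gph g (idx_a n M mA q) (idx_j n M mA q)) (xs @ [x])) else 0)"
        using IH(2)[OF q q'] by (simp add: x mult.commute)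
    qed
  qed
qed

lemma d_le_K: "r < M * 2^n \<Longrightarrow> r < KK n M mA"
proof -
  assume "r < M * 2^n"
  also have "M * 2^n \<le> 2^n * M * 2^mA" by simp
  finally show ?thesis by (simp add: KK_def)
qed

lemma top_chain:
  assumes M: "M > 0"
    and H0: "H0 = on_anc n M mA 0 hadamard" and H1: "H1 = on_anc n M mA 1 hadamard"
    and Dc: "Dm \<in> carrier_mat (full_dim n M mA) (full_dim n M mA)"
    and De: "\<And>q q'. q < full_dim n M mA \<Longrightarrow> q' < full_dim n M mA \<Longrightarrow> Dm $$ (q,q') = (if q = q' then ph q else 0)"
    and CCc: "CC \<in> carrier_mat (full_dim n M mA) (full_dim n M mA)"
    and r: "r < M * 2^n" and c: "c < M * 2^n"
  shows "(H1 * (H0 * (Dm * ((CC * H0) * H1)))) $$ (r,c) =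
    (\<Sum>a1<4. om 1 hadamard 0 a1 * (\<Sum>a2<4. om 0 hadamard a1 a2 *
       (ph (a2 * KK n M mA + r) * (\<Sum>a4<4. (\<Sum>a3<4. CC $$ (a2 * KK n M mA + r, a3 * KK n M mA + c) * om 0 hadamard a3 a4) * om 1 hadamard a4 0))))"
proof -
  let ?K = "KK n M mA" and ?N = "full_dim n M mA"
  have Kp: "?K > 0" using M by (rule KK_pos)
  have rK: "r < ?K" and cK: "c < ?K" using r c by (auto intro: d_le_K)
  have rN: "r < ?N" and cN: "c < ?N" using aK_lt[of 0 r n M mA] aK_lt[of 0 c n M mA] rK cK by auto
  have rdm: "r div ?K = 0" "r mod ?K = r" "c div ?K = 0" "c mod ?K = c" using rK cK by auto
  have aKdm: "\<And>a. (a * ?K + r) div ?K = a" "\<And>a. (a * ?K + r) mod ?K = r" using rK by auto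
  have H0c: "H0 \<in> carrier_mat ?N ?N" and H1c: "H1 \<in> carrier_mat ?N ?N" by (simp_all add: H0 H1)
  have Y1c: "CC * H0 \<in> carrier_mat ?N ?N" using CCc H0c by (rule mult_carrier_mat)
  have Y2c: "(CC * H0) * H1 \<in> carrier_mat ?N ?N" using Y1c H1c by (rule mult_carrier_mat)
  have Y3c: "Dm * ((CC * H0) * H1) \<in> carrier_mat ?N ?N" using Dc Y2c by (rule mult_carrier_mat)
  have Y4c: "H0 * (Dm * ((CC * H0) * H1)) \<in> carrier_mat ?N ?N" using H0c Y3c by (rule mult_carrier_mat)
  have "(H1 * (H0 * (Dm * ((CC * H0) * H1)))) $$ (r,c) =
    (\<Sum>a1<4. om 1 hadamard (r div ?K) a1 * (H0 * (Dm * ((CC * H0) * H1))) $$ (a1 * ?K + r mod ?K, c))"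
    unfolding H1 by (rule on_anc_left[OF M Y4c[unfolded H1] rN cN])
  also have "\<dots> = (\<Sum>a1<4. om 1 hadamard 0 a1 * (\<Sum>a2<4. om 0 hadamard a1 a2 *
       (ph (a2 * ?K + r) * (\<Sum>a4<4. (\<Sum>a3<4. CC $$ (a2 * ?K + r, a3 * ?K + c) * om 0 hadamard a3 a4) * om 1 hadamard a4 0))))"
  proof (intro sum.cong refl arg_cong2[where f = "(*)"])
    fix a1 :: nat assume a1: "a1 \<in> {..<4}"
    show "om 1 hadamard (r div ?K) a1 = om 1 hadamard 0 a1" unfolding rdm ..
    have q1: "a1 * ?K + r < ?N" using a1 rK by (intro aK_lt) auto
    have "(H0 * (Dm * ((CC * H0) * H1))) $$ (a1 * ?K + r mod ?K, c) =
       (\<Sum>a2<4. om 0 hadamard ((a1 * ?K + r) div ?K) a2 * (Dm * ((CC * H0) * H1)) $$ (a2 * ?K + (a1 * ?K + r) mod ?K, c))"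
      unfolding rdm H0 by (rule on_anc_left[OF M Y3c[unfolded H0] q1 cN])
    also have "\<dots> = (\<Sum>a2<4. om 0 hadamard a1 a2 *
       (ph (a2 * ?K + r) * (\<Sum>a4<4. (\<Sum>a3<4. CC $$ (a2 * ?K + r, a3 * ?K + c) * om 0 hadamard a3 a4) * om 1 hadamard a4 0)))"
    proof (intro sum.cong refl)
      fix a2 :: nat assume a2: "a2 \<in> {..<4}"
      have q2: "a2 * ?K + r < ?N" using a2 rK by (intro aK_lt) auto
      have "(Dm * ((CC * H0) * H1)) $$ (a2 * ?K + r, c) = ph (a2 * ?K + r) * ((CC * H0) * H1) $$ (a2 * ?K + r, c)"
        by (rule diag_left[OF Dc De Y2c q2 cN])
      also have "((CC * H0) * H1) $$ (a2 * ?K + r, c) = (\<Sum>a4<4. (CC * H0) $$ (a2 * ?K + r, a4 * ?K + c mod ?K) * om 1 hadamard a4 (c div ?K))"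
        unfolding H1 by (rule on_anc_right[OF M Y1c q2 cN])
      also have "\<dots> = (\<Sum>a4<4. (\<Sum>a3<4. CC $$ (a2 * ?K + r, a3 * ?K + c) * om 0 hadamard a3 a4) * om 1 hadamard a4 0)"
      proof (intro sum.cong refl arg_cong2[where f = "(*)"])
        fix a4 :: nat assume a4: "a4 \<in> {..<4}"
        have q4: "a4 * ?K + c < ?N" using a4 cK by (intro aK_lt) auto
        have "(CC * H0) $$ (a2 * ?K + r, a4 * ?K + c) = (\<Sum>a3<4. CC $$ (a2 * ?K + r, a3 * ?K + (a4 * ?K + c) mod ?K) * om 0 hadamard a3 ((a4 * ?K + c) div ?K))"
          unfolding H0 by (rule on_anc_right[OF M CCc q2 q4])
        also have "\<dots> = (\<Sum>a3<4. CC $$ (a2 * ?K + r, a3 * ?K + c) * om 0 hadamard a3 a4)"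
          using cK by simp
        finally show "(CC * H0) $$ (a2 * ?K + r, a4 * ?K + c mod ?K) = (\<Sum>a3<4. CC $$ (a2 * ?K + r, a3 * ?K + c) * om 0 hadamard a3 a4)"
          unfolding rdm .
        show "om 1 hadamard a4 (c div ?K) = om 1 hadamard a4 0" unfolding rdm ..
      qed
      finally show "om 0 hadamard ((a1 * ?K + r) div ?K) a2 * (Dm * ((CC * H0) * H1)) $$ (a2 * ?K + (a1 * ?K + r) mod ?K, c) =
         om 0 hadamard a1 a2 * (ph (a2 * ?K + r) * (\<Sum>a4<4. (\<Sum>a3<4. CC $$ (a2 * ?K + r, a3 * ?K + c) * om 0 hadamard a3 a4) * om 1 hadamard a4 0))"
        unfolding aKdm by simp
    qed
    finally show "(H0 * (Dm * ((CC * H0) * H1))) $$ (a1 * ?K + r mod ?K, c) =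
       (\<Sum>a2<4. om 0 hadamard a1 a2 *
       (ph (a2 * ?K + r) * (\<Sum>a4<4. (\<Sum>a3<4. CC $$ (a2 * ?K + r, a3 * ?K + c) * om 0 hadamard a3 a4) * om 1 hadamard a4 0)))" .
  qed
  finally show ?thesis .
qed

lemma ctrl_row_triv:
  assumes q: "q < full_dim n M mA" and x: "x < full_dim n M mA"
    and ns: "\<not> ctrl_sat c (idx_a n M mA q) (idx_j n M mA q)"
  shows "ctrl_call n M mA c V $$ (q,x) = (if q = x then 1 else 0)"
proof (cases "idx_a n M mA q = idx_a n M mA x \<and> idx_j n M mA q = idx_j n M mA x")
  case True
  have e: "(q = x) = (bs n M mA q = bs n M mA x)" using True q x by (intro eq_iff_bs) auto
  have A: "(idx_a n M mA q = idx_a n M mA x \<and> idx_j n M mA q = idx_j n M mA x) = True" using True by simp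
  have C: "ctrl_sat c (idx_a n M mA q) (idx_j n M mA q) = False" using ns by simp
  show ?thesis unfolding ctrl_call_entry[OF q x] A C if_True if_False e
    using bs_bound[OF q] bs_bound[OF x] by simp
next
  case False
  then have "q \<noteq> x" by auto
  moreover have nf: "(idx_a n M mA q = idx_a n M mA x \<and> idx_j n M mA q = idx_j n M mA x) = False" using False by simp
  ultimately show ?thesis unfolding ctrl_call_entry[OF q x] nf if_False by simp
qed

lemma ctrl_nonzero:
  assumes q: "q < full_dim n M mA" and x: "x < full_dim n M mA"
    and nz: "ctrl_call n M mA c V $$ (q,x) \<noteq> 0"
  shows "idx_a n M mA q = idx_a n M mA x"
  using nz unfolding ctrl_call_entry[OF q x] by (auto split: if_splits)

definition c0 :: ctrl where "c0 = Ctrl (Some False) None None"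
definition c1 :: ctrl where "c1 = Ctrl (Some True) None None"

lemma ctrl_sat_c0[simp]: "ctrl_sat c0 a j = (\<not> abit 0 a)" by (auto simp: c0_def)
lemma ctrl_sat_c1[simp]: "ctrl_sat c1 a j = abit 0 a" by (auto simp: c1_def)

lemma CC_entry:
  assumes q: "q < full_dim n M mA" and q': "q' < full_dim n M mA"
  shows "(ctrl_call n M mA c1 V1 * ctrl_call n M mA c0 V0) $$ (q,q') =
    (if abit 0 (idx_a n M mA q) then ctrl_call n M mA c1 V1 $$ (q,q') else ctrl_call n M mA c0 V0 $$ (q,q'))"
proof -
  let ?N = "full_dim n M mA" and ?C1 = "ctrl_call n M mA c1 V1" and ?C0 = "ctrl_call n M mA c0 V0"
  have "(?C1 * ?C0) $$ (q,q') = (\<Sum>x<?N. ?C1 $$ (q,x) * ?C0 $$ (x,q'))"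
    by (rule mult_entry[OF ctrl_call_carrier ctrl_call_carrier q q'])
  also have "\<dots> = (if abit 0 (idx_a n M mA q) then ?C1 $$ (q,q') else ?C0 $$ (q,q'))"
  proof (cases "abit 0 (idx_a n M mA q)")
    case False
    have "(\<Sum>x<?N. ?C1 $$ (q,x) * ?C0 $$ (x,q')) = (\<Sum>x<?N. if q = x then ?C0 $$ (x,q') else 0)"
    proof (intro sum.cong refl)
      fix x assume "x \<in> {..<?N}"
      then have x: "x < ?N" by simp
      have nsq: "\<not> ctrl_sat c1 (idx_a n M mA q) (idx_j n M mA q)" using False by simp
      show "?C1 $$ (q,x) * ?C0 $$ (x,q') = (if q = x then ?C0 $$ (x,q') else 0)"
        unfolding ctrl_row_triv[OF q x nsq] by simp
    qed
    also have "\<dots> = ?C0 $$ (q,q')" using q by (subst sum.delta'; simp)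
    finally show ?thesis using False by simp
  next
    case True
    have "(\<Sum>x<?N. ?C1 $$ (q,x) * ?C0 $$ (x,q')) = (\<Sum>x<?N. if x = q' then ?C1 $$ (q,x) else 0)"
    proof (intro sum.cong refl)
      fix x assume "x \<in> {..<?N}"
      then have x: "x < ?N" by simp
      show "?C1 $$ (q,x) * ?C0 $$ (x,q') = (if x = q' then ?C1 $$ (q,x) else 0)"
      proof (cases "?C1 $$ (q,x) = 0")
        case True then show ?thesis by auto
      next
        case False
        then have "idx_a n M mA q = idx_a n M mA x" by (rule ctrl_nonzero[OF q x])
        then have nsx: "\<not> ctrl_sat c0 (idx_a n M mA x) (idx_j n M mA x)" using \<open>abit 0 (idx_a n M mA q)\<close> by simp
        show ?thesis unfolding ctrl_row_triv[OF x q' nsx] by simp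
      qed
    qed
    also have "\<dots> = ?C1 $$ (q,q')" using q' by (subst sum.delta; simp)
    finally show ?thesis using True by simp
  qed
  finally show ?thesis .
qed

lemma CC_top:
  assumes a: "a < 4" and a': "a' < 4" and r: "r < M * 2^n" and c: "c < M * 2^n"
    and UAc: "UA \<in> carrier_mat (2^mA * 2^n) (2^mA * 2^n)"
  shows "(ctrl_call n M mA c1 (dag UA) * ctrl_call n M mA c0 UA) $$ (a * KK n M mA + r, a' * KK n M mA + c) =
    (if a = a' \<and> r div 2^n = c div 2^n then (if abit 0 a then dag UA else UA) $$ (r mod 2^n, c mod 2^n) else 0)"
proof -
  let ?q = "a * KK n M mA + r" and ?q' = "a' * KK n M mA + c"
  note iq = aK_idx[OF a r, of mA] and iq' = aK_idx[OF a' c, of mA]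
  have bq: "bs n M mA ?q = r mod 2^n" "bs n M mA ?q' = c mod 2^n" unfolding bs_def using iq iq' by simp_all
  show ?thesis
    unfolding CC_entry[OF iq(5) iq'(5)] ctrl_call_entry[OF iq(5) iq'(5)] iq(1-4) iq'(1-4) bq
    by auto
qed

lemma hs1: "a < 4 \<Longrightarrow> (\<Sum>a1<4. om 1 hadamard 0 a1 * om 0 hadamard a1 a) = 1/2"
proof -
  have "\<forall>a<4. (\<Sum>a1<4. om 1 hadamard 0 a1 * om 0 hadamard a1 a) = 1/2"
    unfolding all2 all4 om_def sum4 by (simp add: abit_def had_entries had_entries2 sq2 sq2b)
  then show "a < 4 \<Longrightarrow> ?thesis" by blast
qed

lemma hs2: "a < 4 \<Longrightarrow> (\<Sum>a4<4. om 0 hadamard a a4 * om 1 hadamard a4 0) = 1/2"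
proof -
  have "\<forall>a<4. (\<Sum>a4<4. om 0 hadamard a a4 * om 1 hadamard a4 0) = 1/2"
    unfolding all2 all4 om_def sum4 by (simp add: abit_def had_entries had_entries2 sq2 sq2b)
  then show "a < 4 \<Longrightarrow> ?thesis" by blast
qed

definition rzs :: "nat \<Rightarrow> (nat \<Rightarrow> real) \<Rightarrow> (nat \<Rightarrow> real) \<Rightarrow> gate list" where
  "rzs M ph0 ph1 = map (\<lambda>j. G_RZ (Ctrl None None (Some j)) 0 (ph0 j)) [0..<M] @
                   map (\<lambda>j. G_RZ (Ctrl None None (Some j)) 1 (ph1 j)) [0..<M]"

definition gsc :: "nat \<Rightarrow> (nat \<Rightarrow> real) \<Rightarrow> (nat \<Rightarrow> real) \<Rightarrow> gate list" where
  "gsc M ph0 ph1 = [G_Had 1, G_Had 0, G_UA c0, G_UAdag c1] @ rzs M ph0 ph1 @ [G_Had 0, G_Had 1]"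

definition ee :: "real \<Rightarrow> bool \<Rightarrow> complex" where
  "ee \<phi> b = (if b then cis (\<phi>/2) else cis (- \<phi>/2))"

lemma ctrl_sat_j[simp]: "ctrl_sat (Ctrl None None (Some j0)) a j = (j = j0)" by auto

lemma prod_upt_delta: assumes "j < M"
  shows "prod_list (map (\<lambda>j0. if j = j0 then f j0 else 1) [0..<M]) = (f j :: complex)"
proof -
  have "prod_list (map (\<lambda>j0. if j = j0 then f j0 else 1) [0..<M]) = (\<Prod>j0\<in>set [0..<M]. if j = j0 then f j0 else 1)"
    by (rule prod.distinct_set_conv_list[symmetric]) simp
  also have "\<dots> = f j" using assms by (subst prod.delta') simp_all
  finally show ?thesis .
qed

lemma rzph_j: "rzph (Ctrl None None (Some j0)) t \<phi> a j = (if j = j0 then ee \<phi> (abit t a) else 1)"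
  by (simp add: rzph_def ee_def)

lemma rzs_phase: assumes "j < M"
  shows "prod_list (map (\<lambda>g. gph g a j) (rzs M ph0 ph1)) = ee (ph0 j) (abit 0 a) * ee (ph1 j) (abit 1 a)"
proof -
  have "prod_list (map (\<lambda>g. gph g a j) (rzs M ph0 ph1)) =
     prod_list (map (\<lambda>j0. if j = j0 then ee (ph0 j0) (abit 0 a) else 1) [0..<M]) *
     prod_list (map (\<lambda>j0. if j = j0 then ee (ph1 j0) (abit 1 a) else 1) [0..<M])"
    unfolding rzs_def map_append prod_list.append map_map o_def gph.simps rzph_j ..
  then show ?thesis using assms by (simp add: prod_upt_delta)
qed

lemma rzs_valid: "\<forall>g\<in>set (rzs M ph0 ph1). is_RZ g \<and> valid_gate g"
  by (auto simp: rzs_def)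

lemma assoc7:
  fixes A B D E F G H :: "complex mat"
  assumes "A \<in> carrier_mat N N" "B \<in> carrier_mat N N" "D \<in> carrier_mat N N" "E \<in> carrier_mat N N"
    "F \<in> carrier_mat N N" "G \<in> carrier_mat N N" "H \<in> carrier_mat N N"
  shows "((A * B) * D) * (E * (F * (G * H))) = A * (B * (D * (((E * F) * G) * H)))"
  using assms by (simp add: assoc_mult_mat[of _ N N _ N _ N])

lemma sum_sel: "a2 < (4::nat) \<Longrightarrow> (\<Sum>a3<4. (if a2 = a3 \<and> J then X else 0) * f a3) = (if J then X * f a2 else (0::complex))"
proof -
  assume a2: "a2 < 4"
  have "(\<Sum>a3<4. (if a2 = a3 \<and> J then X else 0) * f a3) = (\<Sum>a3<(4::nat). if a2 = a3 then (if J then X * f a3 else 0) else 0)"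
    by (intro sum.cong refl) auto
  also have "\<dots> = (if J then X * f a2 else 0)" using a2 by (subst sum.delta'; simp)
  finally show ?thesis .
qed

lemma swap_sum: "(\<Sum>a1<(4::nat). x a1 * (\<Sum>a2<(4::nat). y a1 a2 * F a2)) = (\<Sum>a2<4. (\<Sum>a1<4. x a1 * y a1 a2) * (F a2 :: complex))"
proof -
  have "(\<Sum>a1<(4::nat). x a1 * (\<Sum>a2<(4::nat). y a1 a2 * F a2)) = (\<Sum>a1<(4::nat). \<Sum>a2<(4::nat). x a1 * y a1 a2 * F a2)"
    by (simp add: sum_distrib_left mult.assoc)
  also have "\<dots> = (\<Sum>a2<(4::nat). \<Sum>a1<(4::nat). x a1 * y a1 a2 * F a2)" by (rule sum.swap)
  also have "\<dots> = (\<Sum>a2<4. (\<Sum>a1<4. x a1 * y a1 a2) * F a2)" by (simp add: sum_distrib_right)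
  finally show ?thesis .
qed

lemma ideal_top:
  assumes M: "M > 0" and UAc: "UA \<in> carrier_mat (2^mA * 2^n) (2^mA * 2^n)"
    and r: "r < M * 2^n" and c: "c < M * 2^n"
  shows "circuit_mat n M mA UA (rz_ideal n M mA) (gsc M ph0 ph1) $$ (r,c) =
   (if r div 2^n = c div 2^n then (1/4) * (\<Sum>a<4. ee (ph0 (r div 2^n)) (abit 0 a) * ee (ph1 (r div 2^n)) (abit 1 a) *
        (if abit 0 a then dag UA else UA) $$ (r mod 2^n, c mod 2^n)) else 0)"
proof -
  let ?R = "rz_ideal n M mA" and ?N = "full_dim n M mA" and ?K = "KK n M mA"
  let ?H0 = "on_anc n M mA 0 hadamard" and ?H1 = "on_anc n M mA 1 hadamard"
  let ?C0 = "ctrl_call n M mA c0 UA" and ?C1 = "ctrl_call n M mA c1 (dag UA)"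
  let ?Dm = "circuit_mat n M mA UA ?R (rzs M ph0 ph1)"
  let ?ph = "\<lambda>q. prod_list (map (\<lambda>g. gph g (idx_a n M mA q) (idx_j n M mA q)) (rzs M ph0 ph1))"
  let ?J = "r div 2^n = c div 2^n"
  let ?W = "\<lambda>a. (if abit 0 a then dag UA else UA) $$ (r mod 2^n, c mod 2^n)"
  let ?pp = "\<lambda>a. ee (ph0 (r div 2^n)) (abit 0 a) * ee (ph1 (r div 2^n)) (abit 1 a)"
  have jM: "r div 2^n < M" using r by (simp add: less_mult_imp_div_less)
  have rK: "r < ?K" using r by (rule d_le_K)
  have allc: "\<forall>g\<in>set ([G_Had 1, G_Had 0, G_UA c0, G_UAdag c1] @ rzs M ph0 ph1 @ [G_Had 0, G_Had 1]).
      gate_mat n M mA UA ?R g \<in> carrier_mat ?N ?N"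
    by (auto simp: rzs_def)
  have D: "?Dm \<in> carrier_mat ?N ?N" "\<And>q q'. q < ?N \<Longrightarrow> q' < ?N \<Longrightarrow> ?Dm $$ (q,q') = (if q = q' then ?ph q else 0)"
    using rz_circ_diag[OF rzs_valid[of M ph0 ph1], where n=n and M=M and mA=mA and UA=UA] by auto
  have "circuit_mat n M mA UA ?R (gsc M ph0 ph1) =
        circuit_mat n M mA UA ?R (rzs M ph0 ph1 @ [G_Had 0, G_Had 1]) * circuit_mat n M mA UA ?R [G_Had 1, G_Had 0, G_UA c0, G_UAdag c1]"
    unfolding gsc_def by (rule circ_append[OF allc])
  also have "circuit_mat n M mA UA ?R (rzs M ph0 ph1 @ [G_Had 0, G_Had 1]) =
        circuit_mat n M mA UA ?R [G_Had 0, G_Had 1] * ?Dm"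
    using allc by (intro circ_append) auto
  also have "circuit_mat n M mA UA ?R [G_Had 0, G_Had 1] = ?H1 * ?H0"
    by (simp add: circuit_mat_def right_mult_one_mat[OF on_anc_carrier])
  also have "circuit_mat n M mA UA ?R [G_Had 1, G_Had 0, G_UA c0, G_UAdag c1] = ?C1 * (?C0 * (?H0 * ?H1))"
    by (simp add: circuit_mat_def right_mult_one_mat[OF on_anc_carrier])
  finally have U: "circuit_mat n M mA UA ?R (gsc M ph0 ph1) = ?H1 * (?H0 * (?Dm * (((?C1 * ?C0) * ?H0) * ?H1)))"
    by (simp only: assoc7[OF on_anc_carrier on_anc_carrier D(1) ctrl_call_carrier ctrl_call_carrier on_anc_carrier on_anc_carrier])
  have CCc: "?C1 * ?C0 \<in> carrier_mat ?N ?N" by (rule mult_carrier_mat[OF ctrl_call_carrier ctrl_call_carrier])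
  have "circuit_mat n M mA UA ?R (gsc M ph0 ph1) $$ (r,c) =
    (\<Sum>a1<4. om 1 hadamard 0 a1 * (\<Sum>a2<4. om 0 hadamard a1 a2 *
       (?ph (a2 * ?K + r) * (\<Sum>a4<4. (\<Sum>a3<4. (?C1 * ?C0) $$ (a2 * ?K + r, a3 * ?K + c) * om 0 hadamard a3 a4) * om 1 hadamard a4 0))))"
    unfolding U by (rule top_chain[OF M refl refl D CCc r c])
  also have "\<dots> = (\<Sum>a1<4. om 1 hadamard 0 a1 * (\<Sum>a2<4. om 0 hadamard a1 a2 *
       (?pp a2 * (if ?J then ?W a2 * (1/2) else 0))))"
  proof (intro sum.cong refl arg_cong2[where f = "(*)"])
    fix a1 a2 :: nat assume a2: "a2 \<in> {..<4}"
    note ia = aK_idx[OF _ r, of a2 mA]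
    show "?ph (a2 * ?K + r) = ?pp a2"
      using a2 ia rzs_phase[OF jM] by simp
    have "(\<Sum>a4<4. (\<Sum>a3<4. (?C1 * ?C0) $$ (a2 * ?K + r, a3 * ?K + c) * om 0 hadamard a3 a4) * om 1 hadamard a4 0)
        = (\<Sum>a4<4. (if ?J then ?W a2 * om 0 hadamard a2 a4 else 0) * om 1 hadamard a4 0)"
    proof (intro sum.cong refl arg_cong2[where f = "(*)"])
      fix a4 :: nat
      have "(\<Sum>a3<4. (?C1 * ?C0) $$ (a2 * ?K + r, a3 * ?K + c) * om 0 hadamard a3 a4) =
            (\<Sum>a3<4. (if a2 = a3 \<and> ?J then ?W a2 else 0) * om 0 hadamard a3 a4)"
      proof (intro sum.cong refl arg_cong2[where f = "(*)"])
        fix a3 :: nat assume a3: "a3 \<in> {..<4}"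
        show "(?C1 * ?C0) $$ (a2 * ?K + r, a3 * ?K + c) = (if a2 = a3 \<and> ?J then ?W a2 else 0)"
        proof -
          have a2': "a2 < 4" and a3': "a3 < 4" using a2 a3 by auto
          show ?thesis using CC_top[OF a2' a3' r c UAc] by simp
        qed
      qed
      also have "\<dots> = (if ?J then ?W a2 * om 0 hadamard a2 a4 else 0)"
        using a2 by (intro sum_sel) simp
      finally show "(\<Sum>a3<4. (?C1 * ?C0) $$ (a2 * ?K + r, a3 * ?K + c) * om 0 hadamard a3 a4) =
            (if ?J then ?W a2 * om 0 hadamard a2 a4 else 0)" .
    qed
    also have "\<dots> = (if ?J then ?W a2 * (\<Sum>a4<4. om 0 hadamard a2 a4 * om 1 hadamard a4 0) else 0)"
      by (cases ?J) (simp_all add: sum_distrib_left mult.assoc)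
    also have "\<dots> = (if ?J then ?W a2 * (1/2) else 0)" using a2 hs2[of a2] by simp
    finally show "(\<Sum>a4<4. (\<Sum>a3<4. (?C1 * ?C0) $$ (a2 * ?K + r, a3 * ?K + c) * om 0 hadamard a3 a4) * om 1 hadamard a4 0)
        = (if ?J then ?W a2 * (1/2) else 0)" .
  qed
  also have "\<dots> = (\<Sum>a2<4. (\<Sum>a1<4. om 1 hadamard 0 a1 * om 0 hadamard a1 a2) * (?pp a2 * (if ?J then ?W a2 * (1/2) else 0)))"
    by (rule swap_sum)
  also have "\<dots> = (\<Sum>a2<4. (1/2) * (?pp a2 * (if ?J then ?W a2 * (1/2) else 0)))"
  proof (intro sum.cong refl)
    fix a2 :: nat assume "a2 \<in> {..<4}"
    then have h: "(\<Sum>a1<4. om 1 hadamard 0 a1 * om 0 hadamard a1 a2) = 1/2" by (intro hs1) simp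
    show "(\<Sum>a1<4. om 1 hadamard 0 a1 * om 0 hadamard a1 a2) * (?pp a2 * (if ?J then ?W a2 * (1/2) else 0)) =
      (1/2) * (?pp a2 * (if ?J then ?W a2 * (1/2) else 0))" unfolding h ..
  qed
  also have "\<dots> = (if ?J then (1/4) * (\<Sum>a<4. ?pp a * ?W a) else 0)"
    by (cases ?J) (simp_all add: sum_distrib_left)
  finally show ?thesis .
qed

lemma top_block_carrier[simp]: "top_block d U \<in> carrier_mat d d" by (simp add: top_block_def)
lemma top_block_entry: "i < d \<Longrightarrow> j < d \<Longrightarrow> top_block d U $$ (i,j) = U $$ (i,j)" by (simp add: top_block_def)

lemma vnorm_sq: "(vnorm v)\<^sup>2 = (\<Sum>i<dim_vec v. (cmod (v $ i))\<^sup>2)"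
  by (simp add: vnorm_def sum_nonneg)

lemma opnorm_top: fixes X :: "complex mat"
  assumes X: "X \<in> carrier_mat N N" and d: "d \<le> N"
  shows "opnorm (top_block d X) \<le> opnorm X"
proof (rule opnorm_le[OF opnorm_nonneg])
  fix v :: "complex vec" assume "v \<in> carrier_vec (dim_col (top_block d X))"
  then have v: "v \<in> carrier_vec d" by (simp add: top_block_def)
  define w where "w = vec N (\<lambda>i. if i < d then v $ i else 0)"
  have w: "w \<in> carrier_vec N" by (simp add: w_def)
  have cX: "dim_col X = N" "dim_row X = N" using X by auto
  have "(vnorm w)\<^sup>2 = (\<Sum>i<N. (cmod (w $ i))\<^sup>2)" by (simp add: vnorm_sq w_def)
  also have "\<dots> = (\<Sum>i<d. (cmod (w $ i))\<^sup>2)"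
    using d by (intro sum.mono_neutral_right) (auto simp: w_def)
  also have "\<dots> = (vnorm v)\<^sup>2" using v d by (simp add: vnorm_sq w_def)
  finally have wv: "vnorm w = vnorm v" using vnorm_nonneg[of w] vnorm_nonneg[of v] by (simp add: power2_eq_iff_nonneg)
  have ent: "\<And>i. i < d \<Longrightarrow> (top_block d X *\<^sub>v v) $ i = (X *\<^sub>v w) $ i"
  proof -
    fix i assume i: "i < d"
    have "(top_block d X *\<^sub>v v) $ i = (\<Sum>j<d. top_block d X $$ (i,j) * v $ j)"
      using i v by (subst mv_index) (auto simp: top_block_def)
    also have "\<dots> = (\<Sum>j<d. X $$ (i,j) * w $ j)"
      using i d by (intro sum.cong refl) (auto simp: w_def top_block_entry)
    also have "\<dots> = (\<Sum>j<N. X $$ (i,j) * w $ j)"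
      using i d by (intro sum.mono_neutral_left) (auto simp: w_def)
    also have "\<dots> = (X *\<^sub>v w) $ i" using i d w cX by (subst mv_index) auto
    finally show "(top_block d X *\<^sub>v v) $ i = (X *\<^sub>v w) $ i" .
  qed
  have dimt: "dim_vec (top_block d X *\<^sub>v v) = d" by (simp add: top_block_def)
  have "(vnorm (top_block d X *\<^sub>v v))\<^sup>2 = (\<Sum>i<d. (cmod ((top_block d X *\<^sub>v v) $ i))\<^sup>2)"
    unfolding vnorm_sq dimt ..
  also have "\<dots> = (\<Sum>i<d. (cmod ((X *\<^sub>v w) $ i))\<^sup>2)"
  proof (intro sum.cong refl)
    fix i assume "i \<in> {..<d}"
    then have "(top_block d X *\<^sub>v v) $ i = (X *\<^sub>v w) $ i" by (intro ent) simp
    then show "(cmod ((top_block d X *\<^sub>v v) $ i))\<^sup>2 = (cmod ((X *\<^sub>v w) $ i))\<^sup>2" by (simp only:)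
  qed
  also have "\<dots> \<le> (\<Sum>i<N. (cmod ((X *\<^sub>v w) $ i))\<^sup>2)"
    using d by (intro sum_mono2) auto
  also have "\<dots> = (vnorm (X *\<^sub>v w))\<^sup>2" using cX by (simp add: vnorm_sq)
  finally have "vnorm (top_block d X *\<^sub>v v) \<le> vnorm (X *\<^sub>v w)"
    using vnorm_nonneg by (simp add: power2_le_iff_abs_le)
  also have "\<dots> \<le> opnorm X * vnorm w" using w cX by (intro opnorm_bound) simp
  finally show "vnorm (top_block d X *\<^sub>v v) \<le> opnorm X * vnorm v" unfolding wv .
qed

lemma blockdiag_opnorm: fixes X :: "complex mat" and Y :: "nat \<Rightarrow> complex mat"
  assumes X: "X \<in> carrier_mat (m * D) (m * D)" and Dp: "D > 0"
    and Xe: "\<And>r c. r < m * D \<Longrightarrow> c < m * D \<Longrightarrow> X $$ (r,c) = (if r div D = c div D then Y (r div D) $$ (r mod D, c mod D) else 0)"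
    and Y: "\<And>j. j < m \<Longrightarrow> Y j \<in> carrier_mat D D \<and> opnorm (Y j) \<le> e" and e: "e \<ge> 0"
  shows "opnorm X \<le> e"
proof (rule opnorm_le[OF e])
  fix v :: "complex vec" assume "v \<in> carrier_vec (dim_col X)"
  then have v: "v \<in> carrier_vec (m * D)" using X by simp
  define vj where "vj j = vec D (\<lambda>s. v $ (j * D + s))" for j
  have vjc: "vj j \<in> carrier_vec D" for j by (simp add: vj_def)
  have lt: "j < m \<Longrightarrow> s < D \<Longrightarrow> j * D + s < m * D" for j s
  proof -
    assume "j < m" "s < D"
    then have "j * D + s < j * D + D" by simp
    also have "\<dots> = (j + 1) * D" by simp
    also have "\<dots> \<le> m * D" using \<open>j < m\<close> by (intro mult_right_mono) auto
    finally show ?thesis .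
  qed
  have dm: "(j * D + s) div D = j" "(j * D + s) mod D = s" if "s < D" for j s using that by auto
  have ent: "(X *\<^sub>v v) $ (j * D + s) = (Y j *\<^sub>v vj j) $ s" if j: "j < m" and s: "s < D" for j s
  proof -
    have Yc: "Y j \<in> carrier_mat D D" using Y j by auto
    have "(X *\<^sub>v v) $ (j * D + s) = (\<Sum>c<m * D. X $$ (j * D + s, c) * v $ c)"
      using v X lt[OF j s] by (subst mv_index) auto
    also have "\<dots> = (\<Sum>j'<m. \<Sum>s'<D. X $$ (j * D + s, j' * D + s') * v $ (j' * D + s'))"
      by (rule sum_split)
    also have "\<dots> = (\<Sum>j'<m. if j' = j then (\<Sum>s'<D. Y j $$ (s, s') * v $ (j * D + s')) else 0)"
    proof (intro sum.cong refl)
      fix j' assume j': "j' \<in> {..<m}"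
      show "(\<Sum>s'<D. X $$ (j * D + s, j' * D + s') * v $ (j' * D + s')) =
        (if j' = j then (\<Sum>s'<D. Y j $$ (s, s') * v $ (j * D + s')) else 0)"
        using j' lt[OF j s] lt[of j'] dm s by (auto simp: Xe)
    qed
    also have "\<dots> = (\<Sum>s'<D. Y j $$ (s, s') * v $ (j * D + s'))" using j by (subst sum.delta; simp)
    also have "\<dots> = (Y j *\<^sub>v vj j) $ s" using s Yc by (subst mv_index) (auto simp: vj_def)
    finally show ?thesis .
  qed
  have "(vnorm (X *\<^sub>v v))\<^sup>2 = (\<Sum>r<m * D. (cmod ((X *\<^sub>v v) $ r))\<^sup>2)" using X by (simp add: vnorm_sq)
  also have "\<dots> = (\<Sum>j<m. \<Sum>s<D. (cmod ((X *\<^sub>v v) $ (j * D + s)))\<^sup>2)" by (rule sum_split)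
  also have "\<dots> = (\<Sum>j<m. (vnorm (Y j *\<^sub>v vj j))\<^sup>2)"
  proof (intro sum.cong refl)
    fix j assume j: "j \<in> {..<m}"
    have Yc: "Y j \<in> carrier_mat D D" using Y j by auto
    show "(\<Sum>s<D. (cmod ((X *\<^sub>v v) $ (j * D + s)))\<^sup>2) = (vnorm (Y j *\<^sub>v vj j))\<^sup>2"
      using j Yc by (simp add: vnorm_sq ent)
  qed
  also have "\<dots> \<le> (\<Sum>j<m. (e * vnorm (vj j))\<^sup>2)"
  proof (intro sum_mono)
    fix j assume j: "j \<in> {..<m}"
    have Yc: "Y j \<in> carrier_mat D D" and Ye: "opnorm (Y j) \<le> e" using Y j by auto
    have "vnorm (Y j *\<^sub>v vj j) \<le> opnorm (Y j) * vnorm (vj j)" using Yc vjc by (intro opnorm_bound) auto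
    also have "\<dots> \<le> e * vnorm (vj j)" using Ye by (intro mult_right_mono) auto
    finally show "(vnorm (Y j *\<^sub>v vj j))\<^sup>2 \<le> (e * vnorm (vj j))\<^sup>2" using vnorm_nonneg by (intro power_mono) auto
  qed
  also have "\<dots> = e\<^sup>2 * (\<Sum>j<m. \<Sum>s<D. (cmod (v $ (j * D + s)))\<^sup>2)"
    by (simp add: power_mult_distrib sum_distrib_left vnorm_sq vj_def)
  also have "\<dots> = e\<^sup>2 * (vnorm v)\<^sup>2" using v by (simp add: vnorm_sq sum_split)
  also have "\<dots> = (e * vnorm v)\<^sup>2" by (simp add: power_mult_distrib)
  finally show "vnorm (X *\<^sub>v v) \<le> e * vnorm v"
    using e vnorm_nonneg by (simp add: power2_le_iff_abs_le)
qed

lemma abit_vals: "abit 0 0 = False" "abit 0 1 = True" "abit 0 2 = False" "abit 0 3 = True"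
  "abit 1 0 = False" "abit 1 1 = False" "abit 1 2 = True" "abit 1 3 = True"
  by (simp_all add: abit_def)

lemma ee_sum: "(\<Sum>a<4. ee p0 (abit 0 a) * ee p1 (abit 1 a) * (if abit 0 a then P else Q)) =
   (ee p1 False + ee p1 True) * (ee p0 False * Q + ee p0 True * P)"
  unfolding sum4 abit_vals by (simp add: algebra_simps)

lemma cis_pair: "cis (- x) + cis x = 2 * complex_of_real (cos x)"
  by (simp add: complex_eq_iff)

lemma ee1_sum: assumes "-1 \<le> x" "x \<le> 1"
  shows "ee (2 * arccos x) False + ee (2 * arccos x) True = 2 * complex_of_real x"
  using assms by (simp add: ee_def cis_pair cos_arccos)

lemma polar: "complex_of_real (cmod z) * cis (Arg z) = z"
  using rcis_cmod_Arg[of z] by (simp add: rcis_def)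

lemma polar_cnj: "complex_of_real (cmod z) * cis (- Arg z) = cnj z"
proof -
  have "cnj (complex_of_real (cmod z) * cis (Arg z)) = cnj z" by (simp only: polar)
  then show ?thesis by (simp add: cis_cnj)
qed

lemma key_alg:
  assumes sK: "sK > 0"
  shows "complex_of_real (sK * aA) * ((1/4) * ((2 * complex_of_real (cmod z / sK)) * (cis (- Arg z) * U + cis (Arg z) * U')))
     = (cnj z / 2) * (complex_of_real aA * U) + (z / 2) * (complex_of_real aA * U')"
proof -
  have e: "complex_of_real (sK * aA) * ((1/4) * ((2 * complex_of_real (cmod z / sK)) * (cis (- Arg z) * U + cis (Arg z) * U')))
      = complex_of_real aA / 2 * ((complex_of_real (cmod z) * cis (- Arg z)) * U + (complex_of_real (cmod z) * cis (Arg z)) * U')"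
    using sK by (simp add: field_simps)
  show ?thesis unfolding e polar polar_cnj by (simp add: field_simps)
qed

lemma cmod_z: "cmod (Complex a 1) = sqrt (1 + a\<^sup>2)"
  by (simp add: cmod_def add.commute)

lemma S_entry:
  assumes A: "A \<in> carrier_mat (2^n) (2^n)" and r: "r < M * 2^n" and c: "c < M * 2^n" and J: "r div 2^n = c div 2^n"
  shows "S_op n M k A $$ (r,c) = (cnj (Complex (k (r div 2^n)) 1) / 2) * A $$ (r mod 2^n, c mod 2^n)
      + (Complex (k (r div 2^n)) 1 / 2) * cnj (A $$ (c mod 2^n, r mod 2^n))"
proof -
  have s: "r mod 2^n < 2^n" "c mod 2^n < 2^n" by simp_all
  have dA: "dim_row A = 2^n" "dim_col A = 2^n" using A by auto
  have "S_op n M k A $$ (r,c) = complex_of_real (k (r div 2^n)) * ((1/2) * (A $$ (r mod 2^n, c mod 2^n) + cnj (A $$ (c mod 2^n, r mod 2^n))))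
      + (1 / (2 * \<i>)) * (A $$ (r mod 2^n, c mod 2^n) - cnj (A $$ (c mod 2^n, r mod 2^n)))"
    using r c J s dA by (simp add: S_op_def herm_part_def antiherm_part_def)
  also have "\<dots> = (cnj (Complex (k (r div 2^n)) 1) / 2) * A $$ (r mod 2^n, c mod 2^n)
      + (Complex (k (r div 2^n)) 1 / 2) * cnj (A $$ (c mod 2^n, r mod 2^n))"
  proof -
    have z: "Complex (k (r div 2^n)) 1 = complex_of_real (k (r div 2^n)) + \<i>"
      "cnj (Complex (k (r div 2^n)) 1) = complex_of_real (k (r div 2^n)) - \<i>" by (simp_all add: complex_eq_iff)
    have i: "1 / (2 * \<i>) = - \<i> / 2" by (simp add: field_simps)
    show ?thesis unfolding z i by (simp add: field_simps)
  qed
  finally show ?thesis .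
qed

definition ph0f :: "(nat \<Rightarrow> real) \<Rightarrow> nat \<Rightarrow> real" where
  "ph0f k j = 2 * Arg (Complex (k j) 1)"
definition ph1f :: "(nat \<Rightarrow> real) \<Rightarrow> real \<Rightarrow> nat \<Rightarrow> real" where
  "ph1f k km j = 2 * arccos (sqrt (1 + (k j)\<^sup>2) / sqrt (1 + km\<^sup>2))"

lemma ratio_bounds: assumes "\<bar>a\<bar> \<le> km"
  shows "-1 \<le> sqrt (1 + a\<^sup>2) / sqrt (1 + km\<^sup>2)" "sqrt (1 + a\<^sup>2) / sqrt (1 + km\<^sup>2) \<le> 1"
    "sqrt (1 + a\<^sup>2) \<le> sqrt (1 + km\<^sup>2)"
proof -
  have "a\<^sup>2 \<le> km\<^sup>2" using assms by (metis abs_ge_zero order_trans power2_abs power_mono)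
  then show le: "sqrt (1 + a\<^sup>2) \<le> sqrt (1 + km\<^sup>2)" by simp
  have pos: "sqrt (1 + km\<^sup>2) > 0" by (simp add: add_pos_nonneg)
  show "sqrt (1 + a\<^sup>2) / sqrt (1 + km\<^sup>2) \<le> 1" using le pos by simp
  have "0 \<le> sqrt (1 + a\<^sup>2) / sqrt (1 + km\<^sup>2)" using pos by simp
  then show "-1 \<le> sqrt (1 + a\<^sup>2) / sqrt (1 + km\<^sup>2)" by linarith
qed

lemma opnorm_Y: fixes E :: "complex mat"
  assumes E: "E \<in> carrier_mat D D" and Eb: "opnorm E \<le> eA"
  shows "opnorm ((cnj z / 2) \<cdot>\<^sub>m E + (z / 2) \<cdot>\<^sub>m dag E) \<le> cmod z * eA"
proof -
  have dE: "dag E \<in> carrier_mat D D" using E dag_carrier[of E] by (metis carrier_matD)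
  have "opnorm ((cnj z / 2) \<cdot>\<^sub>m E + (z / 2) \<cdot>\<^sub>m dag E) \<le> opnorm ((cnj z / 2) \<cdot>\<^sub>m E) + opnorm ((z / 2) \<cdot>\<^sub>m dag E)"
    using E dE by (intro opnorm_add[where nr = D and nc = D]) auto
  also have "\<dots> \<le> cmod (cnj z / 2) * opnorm E + cmod (z / 2) * opnorm (dag E)"
    by (intro add_mono opnorm_smult)
  also have "\<dots> \<le> cmod (cnj z / 2) * eA + cmod (z / 2) * eA"
    using Eb order_trans[OF opnorm_dag[of E] Eb] by (intro add_mono mult_left_mono) auto
  also have "\<dots> = cmod z * eA" by (simp add: norm_divide field_simps)
  finally show ?thesis .
qed

lemma ee_sum2: "(\<Sum>a<4. ee p0 (abit 0 a) * ee p1 (abit 1 a) * (if abit 0 a then P else Q) $$ ij) =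
   (ee p1 False + ee p1 True) * (ee p0 False * Q $$ ij + ee p0 True * P $$ ij)"
  unfolding sum4 abit_vals by (simp add: algebra_simps)

lemma ideal_err:
  assumes M: "M > 0" and UAc: "UA \<in> carrier_mat (2^mA * 2^n) (2^mA * 2^n)" and A: "A \<in> carrier_mat (2^n) (2^n)"
    and Eb: "opnorm (complex_of_real \<alpha>A \<cdot>\<^sub>m top_block (2^n) UA - A) \<le> \<epsilon>A"
    and kb: "\<And>j. j < M \<Longrightarrow> \<bar>k j\<bar> \<le> km"
  shows "opnorm (complex_of_real (sqrt (1 + km\<^sup>2) * \<alpha>A) \<cdot>\<^sub>m top_block (M * 2^n)
      (circuit_mat n M mA UA (rz_ideal n M mA) (gsc M (ph0f k) (ph1f k km))) - S_op n M k A) \<le> sqrt (1 + km\<^sup>2) * \<epsilon>A"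
proof -
  let ?d = "M * 2^n" and ?sK = "sqrt (1 + km\<^sup>2)"
  let ?U = "circuit_mat n M mA UA (rz_ideal n M mA) (gsc M (ph0f k) (ph1f k km))"
  let ?E = "complex_of_real \<alpha>A \<cdot>\<^sub>m top_block (2^n) UA - A"
  let ?z = "\<lambda>j. Complex (k j) 1"
  let ?Y = "\<lambda>j. (cnj (?z j) / 2) \<cdot>\<^sub>m ?E + (?z j / 2) \<cdot>\<^sub>m dag ?E"
  let ?X = "complex_of_real (?sK * \<alpha>A) \<cdot>\<^sub>m top_block ?d ?U - S_op n M k A"
  have sK: "?sK > 0" by (simp add: add_pos_nonneg)
  have Ec: "?E \<in> carrier_mat (2^n) (2^n)" using A by auto
  have eA: "\<epsilon>A \<ge> 0" using Eb opnorm_nonneg[of ?E] by linarith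
  have Sc: "S_op n M k A \<in> carrier_mat ?d ?d" by (simp add: S_op_def)
  have Xc: "?X \<in> carrier_mat ?d ?d" using Sc by auto
  have dA: "dim_row A = 2^n" "dim_col A = 2^n" using A by auto
  have le: "2^n \<le> 2^mA * (2::nat)^n" by simp
  show ?thesis
  proof (rule blockdiag_opnorm[OF Xc _ _ _ mult_nonneg_nonneg[OF less_imp_le[OF sK] eA], where Y = ?Y])
    show "(0::nat) < 2^n" by simp
  next
    fix j assume j: "j < M"
    have "opnorm (?Y j) \<le> cmod (?z j) * \<epsilon>A" by (rule opnorm_Y[OF Ec Eb])
    also have "\<dots> \<le> ?sK * \<epsilon>A"
      using ratio_bounds(3)[OF kb[OF j]] eA by (intro mult_right_mono) (simp_all add: cmod_z)
    moreover have "?Y j \<in> carrier_mat (2^n) (2^n)"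
    proof -
      have dE: "dag ?E \<in> carrier_mat (2^n) (2^n)" using Ec dag_carrier[of ?E] by (metis carrier_matD)
      show ?thesis by (intro add_carrier_mat smult_carrier_mat Ec dE)
    qed
    ultimately show "?Y j \<in> carrier_mat (2^n) (2^n) \<and> opnorm (?Y j) \<le> ?sK * \<epsilon>A" by auto
  next
    fix r c assume r: "r < ?d" and c: "c < ?d"
    let ?j = "r div 2^n" and ?s = "r mod 2^n" and ?s' = "c mod 2^n"
    have s: "?s < 2^n" "?s' < 2^n" by simp_all
    have sD: "?s < 2^mA * 2^n" "?s' < 2^mA * 2^n" using s le by linarith+
    have jM: "?j < M" using r by (simp add: less_mult_imp_div_less)
    have Xrc: "?X $$ (r,c) = complex_of_real (?sK * \<alpha>A) * ?U $$ (r,c) - S_op n M k A $$ (r,c)"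
      using r c Sc by (simp add: top_block_entry top_block_def)
    show "?X $$ (r,c) = (if r div 2^n = c div 2^n then ?Y (r div 2^n) $$ (r mod 2^n, c mod 2^n) else 0)"
    proof (cases "r div 2^n = c div 2^n")
      case False
      then show ?thesis using Xrc ideal_top[OF M UAc r c] r c by (simp add: S_op_def)
    next
      case True
      have x: "-1 \<le> sqrt (1 + (k ?j)\<^sup>2) / ?sK" "sqrt (1 + (k ?j)\<^sup>2) / ?sK \<le> 1"
        using ratio_bounds[OF kb[OF jM]] by auto
      have e0: "ee (ph0f k ?j) False = cis (- Arg (?z ?j))" "ee (ph0f k ?j) True = cis (Arg (?z ?j))"
        by (simp_all add: ee_def ph0f_def)
      have e1: "ee (ph1f k km ?j) False + ee (ph1f k km ?j) True = 2 * complex_of_real (cmod (?z ?j) / ?sK)"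
        unfolding ph1f_def cmod_z by (rule ee1_sum[OF x])
      have dUA: "dag UA $$ (?s, ?s') = cnj (UA $$ (?s', ?s))" using UAc sD by (simp add: carrier_matD)
      have U: "?U $$ (r,c) = (1/4) * ((2 * complex_of_real (cmod (?z ?j) / ?sK)) *
             (cis (- Arg (?z ?j)) * UA $$ (?s, ?s') + cis (Arg (?z ?j)) * cnj (UA $$ (?s', ?s))))"
      proof -
        have JT: "(r div 2^n = c div 2^n) = True" using True by simp
        show ?thesis unfolding ideal_top[OF M UAc r c] JT if_True ee_sum2 e1 e0 dUA ..
      qed
      have Ye: "?Y ?j $$ (?s, ?s') = (cnj (?z ?j) / 2) * (complex_of_real \<alpha>A * UA $$ (?s, ?s') - A $$ (?s, ?s'))
           + (?z ?j / 2) * (complex_of_real \<alpha>A * cnj (UA $$ (?s', ?s)) - cnj (A $$ (?s', ?s)))"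
        using s dA by (simp add: top_block_entry top_block_def)
      show ?thesis
        unfolding Xrc U key_alg[OF sK] S_entry[OF A r c True] Ye using True by (simp add: algebra_simps)
    qed
  qed
qed

lemma gs_ball:
  assumes "P (G_Had 0)" "P (G_Had 1)" "P (G_UA c0)" "P (G_UAdag c1)" "\<And>c t \<phi>. t < 2 \<Longrightarrow> P (G_RZ c t \<phi>)"
  shows "\<forall>g\<in>set (gsc M ph0 ph1). P g"
  using assms by (auto simp: gsc_def rzs_def)

theorem lemma4:
  fixes n M mA :: nat and A UA :: "complex mat" and k :: "nat \<Rightarrow> real"
    and \<alpha>A \<epsilon>A \<epsilon>R \<epsilon> :: real
    and R :: "ctrl \<Rightarrow> nat \<Rightarrow> real \<Rightarrow> complex mat"
  defines "kmax \<equiv> Max ((\<lambda>j. \<bar>k j\<bar>) ` {..<M})"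
  assumes M_pos: "M \<ge> 1"
    and A_dim: "A \<in> carrier_mat (2^n) (2^n)"
    and \<alpha>A_nonneg: "\<alpha>A \<ge> 0"
    and UA_be: "block_encoding \<alpha>A mA \<epsilon>A UA A"
    and R_acc: "\<And>c t \<phi>. t < 2 \<Longrightarrow>
        R c t \<phi> \<in> carrier_mat (full_dim n M mA) (full_dim n M mA) \<and> is_unitary (R c t \<phi>) \<and>
        opnorm (R c t \<phi> - rz_ideal n M mA c t \<phi>) \<le> \<epsilon>R"
    and budget: "\<epsilon>A * sqrt (1 + kmax\<^sup>2) + 2 * M * sqrt (1 + kmax\<^sup>2) * \<epsilon>R * \<alpha>A \<le> \<epsilon>"
  shows "\<exists>gs. list_all valid_gate gs \<and>
           length (filter is_UA_call gs) = 1 \<and> length (filter is_UAdag_call gs) = 1 \<and>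
           length (filter is_RZ gs) = 2 * M \<and>
           block_encoding (sqrt (1 + kmax\<^sup>2) * \<alpha>A) (mA + 2) \<epsilon>
             (circuit_mat n M mA UA R gs) (S_op n M k A)"
proof -
  let ?N = "full_dim n M mA" and ?d = "M * 2^n" and ?sK = "sqrt (1 + kmax\<^sup>2)"
  let ?gs = "gsc M (ph0f k) (ph1f k kmax)"
  let ?R' = "rz_ideal n M mA"
  let ?U = "circuit_mat n M mA UA R ?gs" and ?U' = "circuit_mat n M mA UA ?R' ?gs"
  have M: "M > 0" using M_pos by simp
  have dA: "dim_row A = 2^n" using A_dim by simp
  have UAc: "UA \<in> carrier_mat (2^mA * 2^n) (2^mA * 2^n)" and UAu: "is_unitary UA"
    and Eb: "opnorm (complex_of_real \<alpha>A \<cdot>\<^sub>m top_block (2^n) UA - A) \<le> \<epsilon>A"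
    using UA_be unfolding block_encoding_def Let_def dA by auto
  have dUAc: "dag UA \<in> carrier_mat (2^mA * 2^n) (2^mA * 2^n)" using UAc dag_carrier[of UA] by (metis carrier_matD)
  have kb: "\<And>j. j < M \<Longrightarrow> \<bar>k j\<bar> \<le> kmax" unfolding kmax_def by (intro Max_ge) auto
  have sK: "?sK > 0" by (simp add: add_pos_nonneg)
  have gate_ok: "\<forall>g\<in>set ?gs. gate_mat n M mA UA R g \<in> carrier_mat ?N ?N \<and>
     gate_mat n M mA UA ?R' g \<in> carrier_mat ?N ?N \<and>
     is_unitary (gate_mat n M mA UA R g) \<and> is_unitary (gate_mat n M mA UA ?R' g) \<and>
     opnorm (gate_mat n M mA UA R g - gate_mat n M mA UA ?R' g) \<le> (if is_RZ g then \<epsilon>R else 0)"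
  proof (rule gs_ball)
    show "gate_mat n M mA UA R (G_Had 0) \<in> carrier_mat ?N ?N \<and>
     gate_mat n M mA UA ?R' (G_Had 0) \<in> carrier_mat ?N ?N \<and>
     is_unitary (gate_mat n M mA UA R (G_Had 0)) \<and> is_unitary (gate_mat n M mA UA ?R' (G_Had 0)) \<and>
     opnorm (gate_mat n M mA UA R (G_Had 0) - gate_mat n M mA UA ?R' (G_Had 0)) \<le> (if is_RZ (G_Had 0) then \<epsilon>R else 0)"
      using had_unitary[OF M, of 0 n mA] opnorm_zero_diff[OF on_anc_carrier[of n M mA 0 hadamard]] by simp
    show "gate_mat n M mA UA R (G_Had 1) \<in> carrier_mat ?N ?N \<and>
     gate_mat n M mA UA ?R' (G_Had 1) \<in> carrier_mat ?N ?N \<and>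
     is_unitary (gate_mat n M mA UA R (G_Had 1)) \<and> is_unitary (gate_mat n M mA UA ?R' (G_Had 1)) \<and>
     opnorm (gate_mat n M mA UA R (G_Had 1) - gate_mat n M mA UA ?R' (G_Had 1)) \<le> (if is_RZ (G_Had 1) then \<epsilon>R else 0)"
      using had_unitary[OF M, of 1 n mA] opnorm_zero_diff[OF on_anc_carrier[of n M mA 1 hadamard]] by simp
    show "gate_mat n M mA UA R (G_UA c0) \<in> carrier_mat ?N ?N \<and>
     gate_mat n M mA UA ?R' (G_UA c0) \<in> carrier_mat ?N ?N \<and>
     is_unitary (gate_mat n M mA UA R (G_UA c0)) \<and> is_unitary (gate_mat n M mA UA ?R' (G_UA c0)) \<and>
     opnorm (gate_mat n M mA UA R (G_UA c0) - gate_mat n M mA UA ?R' (G_UA c0)) \<le> (if is_RZ (G_UA c0) then \<epsilon>R else 0)"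
      using ctrl_call_unitary[OF UAu UAc, of M c0] opnorm_zero_diff[OF ctrl_call_carrier[of n M mA c0 UA]] by simp
    show "gate_mat n M mA UA R (G_UAdag c1) \<in> carrier_mat ?N ?N \<and>
     gate_mat n M mA UA ?R' (G_UAdag c1) \<in> carrier_mat ?N ?N \<and>
     is_unitary (gate_mat n M mA UA R (G_UAdag c1)) \<and> is_unitary (gate_mat n M mA UA ?R' (G_UAdag c1)) \<and>
     opnorm (gate_mat n M mA UA R (G_UAdag c1) - gate_mat n M mA UA ?R' (G_UAdag c1)) \<le> (if is_RZ (G_UAdag c1) then \<epsilon>R else 0)"
      using ctrl_call_unitary[OF unitary_dag[OF UAu] dUAc, of M c1] opnorm_zero_diff[OF ctrl_call_carrier[of n M mA c1 "dag UA"]] by simp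
    fix c t \<phi> assume t: "t < (2::nat)"
    show "gate_mat n M mA UA R (G_RZ c t \<phi>) \<in> carrier_mat ?N ?N \<and>
     gate_mat n M mA UA ?R' (G_RZ c t \<phi>) \<in> carrier_mat ?N ?N \<and>
     is_unitary (gate_mat n M mA UA R (G_RZ c t \<phi>)) \<and> is_unitary (gate_mat n M mA UA ?R' (G_RZ c t \<phi>)) \<and>
     opnorm (gate_mat n M mA UA R (G_RZ c t \<phi>) - gate_mat n M mA UA ?R' (G_RZ c t \<phi>)) \<le> (if is_RZ (G_RZ c t \<phi>) then \<epsilon>R else 0)"
      using R_acc[OF t, of c \<phi>] rz_unitary[OF t, of n M mA c \<phi>] by simp
  qed
  have Uc: "?U \<in> carrier_mat ?N ?N" using gate_ok by (intro circ_carrier) auto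
  have U'c: "?U' \<in> carrier_mat ?N ?N" using gate_ok by (intro circ_carrier) auto
  have Uu: "is_unitary ?U" using gate_ok by (intro circ_unitary) auto
  have cntRZ: "length (filter is_RZ ?gs) = 2 * M" by (simp add: gsc_def rzs_def o_def)
  have err1: "opnorm (?U - ?U') \<le> \<epsilon>R * real (2 * M)"
    using circ_err[OF gate_ok] unfolding cntRZ .
  have Nd: "?N = 2^(mA + 2) * ?d" by (simp add: full_dim_def power_add ac_simps)
  have dN: "?d \<le> ?N" unfolding Nd by simp
  have Sc: "S_op n M k A \<in> carrier_mat ?d ?d" by (simp add: S_op_def)
  have DDc: "?U - ?U' \<in> carrier_mat ?N ?N" using Uc U'c by auto
  let ?a = "complex_of_real (?sK * \<alpha>A)"
  have split: "?a \<cdot>\<^sub>m top_block ?d ?U - S_op n M k A =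
      ?a \<cdot>\<^sub>m top_block ?d (?U - ?U') + (?a \<cdot>\<^sub>m top_block ?d ?U' - S_op n M k A)"
  proof (rule eq_matI)
    fix i j assume "i < dim_row (?a \<cdot>\<^sub>m top_block ?d (?U - ?U') + (?a \<cdot>\<^sub>m top_block ?d ?U' - S_op n M k A))"
      "j < dim_col (?a \<cdot>\<^sub>m top_block ?d (?U - ?U') + (?a \<cdot>\<^sub>m top_block ?d ?U' - S_op n M k A))"
    then have i: "i < ?d" and j: "j < ?d" using Sc by (auto simp: top_block_def)
    have iN: "i < ?N" and jN: "j < ?N" using i j dN by linarith+
    show "(?a \<cdot>\<^sub>m top_block ?d ?U - S_op n M k A) $$ (i,j) =
      (?a \<cdot>\<^sub>m top_block ?d (?U - ?U') + (?a \<cdot>\<^sub>m top_block ?d ?U' - S_op n M k A)) $$ (i,j)"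
      using i j iN jN Sc Uc U'c by (simp add: top_block_def algebra_simps)
  qed (use Sc in \<open>auto simp: top_block_def\<close>)
  have "opnorm (?a \<cdot>\<^sub>m top_block ?d ?U - S_op n M k A) \<le>
      opnorm (?a \<cdot>\<^sub>m top_block ?d (?U - ?U')) + opnorm (?a \<cdot>\<^sub>m top_block ?d ?U' - S_op n M k A)"
    unfolding split using Sc by (intro opnorm_add[where nr = ?d and nc = ?d]) auto
  also have "\<dots> \<le> cmod ?a * opnorm (top_block ?d (?U - ?U')) + ?sK * \<epsilon>A"
    using ideal_err[OF M UAc A_dim Eb kb] by (intro add_mono opnorm_smult) auto
  also have "\<dots> \<le> (?sK * \<alpha>A) * (\<epsilon>R * real (2 * M)) + ?sK * \<epsilon>A"
  proof -
    have "opnorm (top_block ?d (?U - ?U')) \<le> \<epsilon>R * real (2 * M)"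
      using opnorm_top[OF DDc dN] err1 by linarith
    moreover have "cmod ?a = ?sK * \<alpha>A"
    proof -
      have "cmod ?a = \<bar>?sK * \<alpha>A\<bar>" by (rule norm_of_real)
      also have "\<dots> = ?sK * \<alpha>A" using \<alpha>A_nonneg sK by (intro abs_of_nonneg) simp
      finally show ?thesis .
    qed
    ultimately show ?thesis using \<alpha>A_nonneg sK by (simp add: mult_left_mono)
  qed
  also have "\<dots> \<le> \<epsilon>" using budget by (simp add: algebra_simps)
  finally have bnd: "opnorm (?a \<cdot>\<^sub>m top_block ?d ?U - S_op n M k A) \<le> \<epsilon>" .
  have dS: "dim_row (S_op n M k A) = ?d" by (simp add: S_op_def)
  have "block_encoding (?sK * \<alpha>A) (mA + 2) \<epsilon> ?U (S_op n M k A)"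
    unfolding block_encoding_def Let_def dS using Sc Uc Uu bnd unfolding Nd by auto
  moreover have "list_all valid_gate ?gs" by (auto simp: gsc_def rzs_def list_all_iff)
  moreover have "length (filter is_UA_call ?gs) = 1" by (simp add: gsc_def rzs_def o_def)
  moreover have "length (filter is_UAdag_call ?gs) = 1" by (simp add: gsc_def rzs_def o_def)
  ultimately show ?thesis using cntRZ by blast
qed

end
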